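(* (1) Almost all trees have the property that, for every assignment of nonzero real weights to their edges, the resulting weighted tree contains at least two sedentary vertices. (2) For every fixed integer $k\ge3$, almost all unweighted trees contain $k$ sedentary vertices.
   Context: "Almost all trees have property $P$" means the proportion of trees on $n$ vertices having $P$ tends to $1$ as $n\to\infty$. For a weighted graph with weighted adjacency matrix $A$, $U(t)=e^{itA}$; a vertex $u$ is sedentary if $\inf_{t>0}|U(t)_{u,u}|\ge C$ for some constant $0<C\le1$. Unweighted means all edge weights equal $1$. *)

theory Defs
  imports Complex_Main
begin

definition adj :: "nat set set \<Rightarrow> nat \<Rightarrow> nat \<Rightarrow> bool" where
  "adj T u v \<longleftrightarrow> {u, v} \<in> T"

definition is_cycle :: "nat set set \<Rightarrow> nat list \<Rightarrow> bool" where
  "is_cycle T vs \<longleftrightarrow> length vs \<ge> 3 \<and> distinct vs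
     \<and> (\<forall>i. Suc i < length vs \<longrightarrow> adj T (vs ! i) (vs ! Suc i))
     \<and> adj T (last vs) (hd vs)"

definition is_tree :: "nat \<Rightarrow> nat set set \<Rightarrow> bool" where
  "is_tree n T \<longleftrightarrow>
     T \<subseteq> {e. \<exists>u v. e = {u, v} \<and> u \<noteq> v \<and> u < n \<and> v < n}
     \<and> (\<forall>u<n. \<forall>v<n. (adj T)\<^sup>*\<^sup>* u v)
     \<and> (\<nexists>vs. is_cycle T vs)"

definition trees :: "nat \<Rightarrow> nat set set set" where
  "trees n = {T. is_tree n T}"

definition almost_all_trees :: "(nat \<Rightarrow> nat set set \<Rightarrow> bool) \<Rightarrow> bool" where
  "almost_all_trees P \<longleftrightarrow>
     (\<lambda>n. real (card {T \<in> trees n. P n T}) / real (card (trees n))) \<longlonglongrightarrow> 1"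

text \<open>Weighted adjacency matrix (n x n matrices as functions with indices < n).\<close>
definition wadj :: "nat set set \<Rightarrow> (nat set \<Rightarrow> real) \<Rightarrow> nat \<Rightarrow> nat \<Rightarrow> real" where
  "wadj T w u v = (if {u, v} \<in> T then w {u, v} else 0)"

fun mpow :: "nat \<Rightarrow> (nat \<Rightarrow> nat \<Rightarrow> complex) \<Rightarrow> nat \<Rightarrow> nat \<Rightarrow> nat \<Rightarrow> complex" where
  "mpow n A 0 = (\<lambda>i j. if i = j then 1 else 0)"
| "mpow n A (Suc k) = (\<lambda>i j. \<Sum>l<n. mpow n A k i l * A l j)"

definition U :: "nat \<Rightarrow> (nat \<Rightarrow> nat \<Rightarrow> real) \<Rightarrow> real \<Rightarrow> nat \<Rightarrow> nat \<Rightarrow> complex" where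
  "U n A t u v = (\<Sum>k. ((\<i> * complex_of_real t) ^ k / of_nat (fact k))
                       * mpow n (\<lambda>i j. complex_of_real (A i j)) k u v)"

definition sedentary :: "nat \<Rightarrow> (nat \<Rightarrow> nat \<Rightarrow> real) \<Rightarrow> nat \<Rightarrow> bool" where
  "sedentary n A u \<longleftrightarrow>
     (\<exists>C::real. 0 < C \<and> C \<le> 1 \<and> (INF t\<in>{0<..}. cmod (U n A t u u)) \<ge> C)"

end

theory Submission
  imports Defs
begin

definition nbrs :: "nat set set \<Rightarrow> nat \<Rightarrow> nat set" where
  "nbrs T x = {y. {x, y} \<in> T}"

definition deg :: "nat set set \<Rightarrow> nat \<Rightarrow> nat" where
  "deg T x = card (nbrs T x)"

definition proper :: "nat \<Rightarrow> nat set set \<Rightarrow> bool" where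
  "proper n T \<longleftrightarrow> T \<subseteq> {e. \<exists>u v. e = {u, v} \<and> u \<noteq> v \<and> u < n \<and> v < n}"

definition conn :: "nat \<Rightarrow> nat set set \<Rightarrow> bool" where
  "conn n T \<longleftrightarrow> (\<forall>u<n. \<forall>v<n. (adj T)\<^sup>*\<^sup>* u v)"

lemma adj_sym: "adj T u v = adj T v u"
  unfolding adj_def by (simp add: insert_commute)

lemma rtc_sym: "(adj T)\<^sup>*\<^sup>* u v \<Longrightarrow> (adj T)\<^sup>*\<^sup>* v u"
proof (induction rule: rtranclp_induct)
  case base then show ?case by simp
next
  case (step y z)
  then show ?case using adj_sym by (metis converse_rtranclp_into_rtranclp)
qed

lemma rtc_hom:
  assumes "\<And>x y. adj T x y \<Longrightarrow> (adj T')\<^sup>*\<^sup>* (f x) (f y)"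
  shows "(adj T)\<^sup>*\<^sup>* u v \<Longrightarrow> (adj T')\<^sup>*\<^sup>* (f u) (f v)"
proof (induction rule: rtranclp_induct)
  case base then show ?case by simp
next
  case (step y z)
  then show ?case using assms by (meson rtranclp_trans)
qed

lemma proper_finite: "proper n T \<Longrightarrow> finite T"
proof -
  assume "proper n T"
  then have "T \<subseteq> Pow {..<n}" unfolding proper_def by auto
  then show ?thesis by (meson finite_Pow_iff finite_lessThan finite_subset)
qed

lemma proper_edge: "proper n T \<Longrightarrow> e \<in> T \<Longrightarrow> \<exists>u v. e = {u, v} \<and> u \<noteq> v \<and> u < n \<and> v < n"
  unfolding proper_def by auto

lemma proper_adj: "proper n T \<Longrightarrow> adj T u v \<Longrightarrow> u \<noteq> v \<and> u < n \<and> v < n"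
  unfolding proper_def adj_def by (auto simp: doubleton_eq_iff)

lemma nbrs_finite: "proper n T \<Longrightarrow> finite (nbrs T x)"
proof -
  assume p: "proper n T"
  have "nbrs T x \<subseteq> {..<n}" using proper_adj[OF p] unfolding nbrs_def adj_def by auto
  then show ?thesis using finite_subset by blast
qed

lemma nbrs_adj: "y \<in> nbrs T x \<longleftrightarrow> adj T x y"
  unfolding nbrs_def adj_def by simp

subsection \<open>Distances\<close>

definition dst :: "nat set set \<Rightarrow> nat \<Rightarrow> nat \<Rightarrow> nat" where
  "dst T r x = (LEAST k. (adj T ^^ k) x r)"

lemma dst_path: "(adj T)\<^sup>*\<^sup>* x r \<Longrightarrow> (adj T ^^ dst T r x) x r"
  unfolding dst_def by (metis LeastI_ex rtranclp_power)

lemma dst_le: "(adj T ^^ k) x r \<Longrightarrow> dst T r x \<le> k"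
  unfolding dst_def by (rule Least_le)

lemma dst_0_iff: "(adj T)\<^sup>*\<^sup>* x r \<Longrightarrow> dst T r x = 0 \<longleftrightarrow> x = r"
proof
  assume "(adj T)\<^sup>*\<^sup>* x r" "dst T r x = 0"
  then show "x = r" using dst_path by fastforce
next
  assume "x = r"
  then show "dst T r x = 0" using dst_le[where k=0 and T=T and x=x and r=r] by simp
qed

lemma dst_adj: "(adj T)\<^sup>*\<^sup>* z r \<Longrightarrow> adj T x z \<Longrightarrow> dst T r x \<le> Suc (dst T r z)"
  by (meson dst_le dst_path relpowp_Suc_I2)

lemma dst_par_ex:
  assumes "(adj T)\<^sup>*\<^sup>* x r" "dst T r x \<noteq> 0"
  shows "\<exists>z. adj T x z \<and> Suc (dst T r z) = dst T r x \<and> (adj T)\<^sup>*\<^sup>* z r"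
proof -
  obtain k where k: "dst T r x = Suc k" using assms(2) not0_implies_Suc by blast
  have "(adj T ^^ Suc k) x r" using dst_path[OF assms(1)] k by simp
  then obtain z where z: "adj T x z" "(adj T ^^ k) z r" using relpowp_Suc_D2 by metis
  have zr: "(adj T)\<^sup>*\<^sup>* z r" using z(2) relpowp_imp_rtranclp by metis
  have "dst T r z \<le> k" using dst_le z(2) by blast
  moreover have "dst T r x \<le> Suc (dst T r z)" using dst_adj zr z(1) by blast
  ultimately have "Suc (dst T r z) = dst T r x" using k by simp
  then show ?thesis using z zr by blast
qed

definition par :: "nat set set \<Rightarrow> nat \<Rightarrow> nat \<Rightarrow> nat" where
  "par T r x = (SOME z. adj T x z \<and> Suc (dst T r z) = dst T r x \<and> (adj T)\<^sup>*\<^sup>* z r)"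

lemma par:
  assumes "(adj T)\<^sup>*\<^sup>* x r" "dst T r x \<noteq> 0"
  shows "adj T x (par T r x)" "Suc (dst T r (par T r x)) = dst T r x" "(adj T)\<^sup>*\<^sup>* (par T r x) r"
  using someI_ex[OF dst_par_ex[OF assms]] unfolding par_def by blast+

lemma conn_card_lb:
  assumes p: "proper n T" and c: "conn n T" and n: "n \<ge> 1"
  shows "n \<le> card T + 1"
proof -
  let ?f = "\<lambda>v. {v, par T 0 v}"
  let ?V = "{..<n} - {0}"
  have cr: "(adj T)\<^sup>*\<^sup>* v 0" if "v < n" for v using c n that unfolding conn_def by auto
  have d0: "dst T 0 v \<noteq> 0" if "v \<in> ?V" for v using that dst_0_iff[OF cr] by auto
  have inj: "inj_on ?f ?V"
  proof (rule inj_onI)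
    fix x y assume xy: "x \<in> ?V" "y \<in> ?V" "?f x = ?f y"
    show "x = y"
    proof (rule ccontr)
      assume "x \<noteq> y"
      then have "x = par T 0 y" "y = par T 0 x" using xy(3) by (auto simp: doubleton_eq_iff)
      moreover have "x < n" "y < n" using xy(1,2) by auto
      ultimately have "Suc (dst T 0 y) = dst T 0 x" "Suc (dst T 0 x) = dst T 0 y"
        using par(2)[OF cr d0] xy(1,2) by metis+
      then show False by simp
    qed
  qed
  have "?f ` ?V \<subseteq> T" using par(1)[OF cr d0] unfolding adj_def by auto
  then have "card ?V \<le> card T" using card_inj_on_le[OF inj] proper_finite[OF p] by blast
  then show ?thesis using n by simp
qed

lemma cycle_of_nonbridge:
  assumes e: "{x, y} \<in> T" and xy: "x \<noteq> y" and c: "(adj (T - {{x, y}}))\<^sup>*\<^sup>* x y"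
  shows "\<exists>vs. is_cycle T vs"
proof -
  define T' where "T' = T - {{x, y}}"
  define d where "d = dst T' y"
  define zs where "zs i = (par T' y ^^ i) x" for i
  have cx: "(adj T')\<^sup>*\<^sup>* x y" using c T'_def by simp
  define k where "k = d x"
  have k0: "k \<noteq> 0" using dst_0_iff[OF cx] xy k_def d_def by simp
  have k1: "k \<noteq> 1"
  proof
    assume "k = 1"
    then have "(adj T' ^^ 1) x y" using dst_path[OF cx] k_def d_def by simp
    then have "adj T' x y" by (simp only: relpowp_1)
    then show False using T'_def unfolding adj_def by simp
  qed
  have inv: "(adj T')\<^sup>*\<^sup>* (zs i) y \<and> d (zs i) = k - i" if "i \<le> k" for i
    using that
  proof (induction i)
    case 0 then show ?case using cx zs_def k_def by simp
  next
    case (Suc i)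
    then have ih: "(adj T')\<^sup>*\<^sup>* (zs i) y" "d (zs i) = k - i" by auto
    have nz: "dst T' y (zs i) \<noteq> 0" using ih(2) Suc.prems d_def by simp
    have "zs (Suc i) = par T' y (zs i)" using zs_def by simp
    then show ?case using par(2,3)[OF ih(1) nz] ih(2) d_def by simp
  qed
  have adjz: "adj T' (zs i) (zs (Suc i))" if "i < k" for i
  proof -
    have ih: "(adj T')\<^sup>*\<^sup>* (zs i) y" "d (zs i) = k - i" using inv that by auto
    have nz: "dst T' y (zs i) \<noteq> 0" using ih(2) that d_def by simp
    show ?thesis using par(1)[OF ih(1) nz] zs_def by simp
  qed
  have zk: "zs k = y" using inv[of k] dst_0_iff d_def by (metis diff_self_eq_0 order_refl)
  define vs where "vs = map zs [0..<Suc k]"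
  have "is_cycle T vs"
    unfolding is_cycle_def
  proof (intro conjI allI impI)
    show "3 \<le> length vs" using k0 k1 vs_def by simp
    show "distinct vs" unfolding vs_def
    proof (rule distinct_map[THEN iffD2], rule conjI)
      show "inj_on zs (set [0..<Suc k])"
      proof (rule inj_onI)
        fix i j assume "i \<in> set [0..<Suc k]" "j \<in> set [0..<Suc k]" "zs i = zs j"
        then show "i = j" using inv[of i] inv[of j] by auto
      qed
    qed simp
    fix i assume "Suc i < length vs"
    then have "i < k" using vs_def by simp
    then show "adj T (vs ! i) (vs ! Suc i)" using adjz[of i] unfolding vs_def T'_def adj_def
      by (simp del: upt_Suc)
  next
    have "last vs = y" using zk vs_def by simp
    moreover have "hd vs = x" using vs_def zs_def by (simp del: upt_Suc add: hd_map)
    ultimately show "adj T (last vs) (hd vs)" using e unfolding adj_def by (simp add: insert_commute)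
  qed
  then show ?thesis by blast
qed

lemma tree_proper: "is_tree n T \<Longrightarrow> proper n T"
  unfolding is_tree_def proper_def by blast

lemma tree_conn: "is_tree n T \<Longrightarrow> conn n T"
  unfolding is_tree_def conn_def by blast

lemma avoid_path:
  assumes p: "proper n T" and c: "conn n T" and n: "n \<ge> 1" and e: "e = {x, y}"
  shows "z < n \<Longrightarrow> dst T 0 z < dst T 0 x \<Longrightarrow> (adj (T - {e}))\<^sup>*\<^sup>* z 0"
proof (induction "dst T 0 z" arbitrary: z)
  case 0
  have "(adj T)\<^sup>*\<^sup>* z 0" using c n 0 unfolding conn_def by auto
  then have "z = 0" using dst_0_iff 0 by metis
  then show ?case by simp
next
  case (Suc j)
  have cz: "(adj T)\<^sup>*\<^sup>* z 0" using c n Suc unfolding conn_def by auto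
  have nz: "dst T 0 z \<noteq> 0" using Suc by simp
  define q where "q = par T 0 z"
  have a: "adj T z q" and dq: "Suc (dst T 0 q) = dst T 0 z" using par[OF cz nz] q_def by auto
  have qn: "q < n" using proper_adj[OF p a] by simp
  have "q \<noteq> x" "z \<noteq> x" using dq Suc.prems by auto
  then have "{z, q} \<noteq> e" using e by auto
  then have "adj (T - {e}) z q" using a unfolding adj_def by simp
  moreover have "(adj (T - {e}))\<^sup>*\<^sup>* q 0" using Suc.hyps(1)[of q] dq Suc.hyps(2) Suc.prems qn by simp
  ultimately show ?case by (meson converse_rtranclp_into_rtranclp)
qed

lemma tree_edge_par:
  assumes t: "is_tree n T" and n: "n \<ge> 1" and e: "e = {x, y}" "e \<in> T" and xy: "x \<noteq> y"
    and le: "dst T 0 y \<le> dst T 0 x"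
  shows "e \<in> (\<lambda>v. {v, par T 0 v}) ` ({..<n} - {0})"
proof -
  have p: "proper n T" and c: "conn n T" using tree_proper tree_conn t by auto
  have xn: "x < n" and yn: "y < n" using proper_adj[OF p, of x y] e unfolding adj_def by auto
  have cx: "(adj T)\<^sup>*\<^sup>* x 0" and cy: "(adj T)\<^sup>*\<^sup>* y 0" using c n xn yn unfolding conn_def by auto
  have dx: "dst T 0 x \<noteq> 0"
  proof
    assume "dst T 0 x = 0"
    then have "dst T 0 y = 0" using le by simp
    then show False using \<open>dst T 0 x = 0\<close> dst_0_iff cx cy xy by metis
  qed
  define q where "q = par T 0 x"
  have a: "adj T x q" and dq: "Suc (dst T 0 q) = dst T 0 x" using par[OF cx dx] q_def by auto
  have qn: "q < n" using proper_adj[OF p a] by simp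
  have "q = y"
  proof (rule ccontr)
    assume qy: "q \<noteq> y"
    have "{x, q} \<noteq> e" using qy xy e by (auto simp: doubleton_eq_iff)
    then have s1: "adj (T - {e}) x q" using a unfolding adj_def by simp
    have s2: "(adj (T - {e}))\<^sup>*\<^sup>* q 0" using avoid_path[OF p c n e(1) qn] dq by simp
    have s3: "(adj (T - {e}))\<^sup>*\<^sup>* y 0"
    proof (cases "dst T 0 y < dst T 0 x")
      case True then show ?thesis using avoid_path[OF p c n e(1) yn] by simp
    next
      case False
      then have eq: "dst T 0 y = dst T 0 x" using le by simp
      then have dy: "dst T 0 y \<noteq> 0" using dx by simp
      define r where "r = par T 0 y"
      have a2: "adj T y r" and dr: "Suc (dst T 0 r) = dst T 0 y" using par[OF cy dy] r_def by auto
      have rn: "r < n" using proper_adj[OF p a2] by simp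
      have "r \<noteq> x" using dr eq by auto
      then have "{y, r} \<noteq> e" using xy e by (auto simp: doubleton_eq_iff)
      then have "adj (T - {e}) y r" using a2 unfolding adj_def by simp
      moreover have "(adj (T - {e}))\<^sup>*\<^sup>* r 0" using avoid_path[OF p c n e(1) rn] dr eq by simp
      ultimately show ?thesis by (meson converse_rtranclp_into_rtranclp)
    qed
    have "(adj (T - {e}))\<^sup>*\<^sup>* x y" using s1 s2 s3 rtc_sym
      by (meson converse_rtranclp_into_rtranclp rtranclp_trans)
    then have "\<exists>vs. is_cycle T vs" using cycle_of_nonbridge[of x y T] e xy by simp
    then show False using t unfolding is_tree_def by blast
  qed
  then have "e = (\<lambda>v. {v, par T 0 v}) x" using e(1) q_def by simp
  moreover have "x \<in> {..<n} - {0}" using xn dx dst_0_iff[OF cx] by auto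
  ultimately show ?thesis by blast
qed

lemma tree_card:
  assumes t: "is_tree n T" and n: "n \<ge> 1"
  shows "card T + 1 = n"
proof -
  have p: "proper n T" and c: "conn n T" using tree_proper tree_conn t by auto
  have "T \<subseteq> (\<lambda>v. {v, par T 0 v}) ` ({..<n} - {0})"
  proof
    fix e assume e: "e \<in> T"
    then obtain x y where xy: "e = {x, y}" "x \<noteq> y" using proper_edge[OF p] by blast
    show "e \<in> (\<lambda>v. {v, par T 0 v}) ` ({..<n} - {0})"
    proof (cases "dst T 0 y \<le> dst T 0 x")
      case True then show ?thesis using tree_edge_par[OF t n xy(1) e xy(2)] by simp
    next
      case False
      have "e = {y, x}" using xy by auto
      then show ?thesis using tree_edge_par[OF t n _ e] xy(2) False by simp
    qed
  qed
  then have "card T \<le> card ((\<lambda>v. {v, par T 0 v}) ` ({..<n} - {0}))"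
    by (simp add: card_mono)
  also have "\<dots> \<le> card ({..<n} - {0::nat})" by (rule card_image_le) simp
  finally have "card T \<le> n - 1" using n by simp
  then show ?thesis using conn_card_lb[OF p c n] n by linarith
qed

lemma cycle_path:
  assumes cy: "is_cycle T vs"
  shows "i < length vs \<Longrightarrow> (adj (T - {{last vs, hd vs}}))\<^sup>*\<^sup>* (hd vs) (vs ! i)"
proof (induction i)
  case 0
  then show ?case by (simp add: hd_conv_nth)
next
  case (Suc i)
  have l: "length vs \<ge> 3" "distinct vs" and a: "adj T (vs ! i) (vs ! Suc i)"
    using cy Suc.prems unfolding is_cycle_def by auto
  have ne: "vs \<noteq> []" using l by auto
  have lst: "last vs = vs ! (length vs - 1)" using ne by (simp add: last_conv_nth)
  have hd: "hd vs = vs ! 0" using ne by (simp add: hd_conv_nth)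
  have "{vs ! i, vs ! Suc i} \<noteq> {last vs, hd vs}"
  proof
    assume "{vs ! i, vs ! Suc i} = {last vs, hd vs}"
    then have "(vs ! i = last vs \<and> vs ! Suc i = hd vs) \<or> (vs ! i = hd vs \<and> vs ! Suc i = last vs)"
      by (auto simp: doubleton_eq_iff)
    then show False
    proof
      assume "vs ! i = last vs \<and> vs ! Suc i = hd vs"
      then have "vs ! i = vs ! (length vs - 1)" using lst by simp
      then have "i = length vs - 1" using nth_eq_iff_index_eq[OF l(2), of i "length vs - 1"] Suc.prems by simp
      then show False using Suc.prems by simp
    next
      assume h: "vs ! i = hd vs \<and> vs ! Suc i = last vs"
      then have "vs ! Suc i = vs ! (length vs - 1)" using lst by simp
      then have "Suc i = length vs - 1" using nth_eq_iff_index_eq[OF l(2), of "Suc i" "length vs - 1"] Suc.prems by simp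
      moreover have "vs ! i = vs ! 0" using h hd by simp
      then have "i = 0" using nth_eq_iff_index_eq[OF l(2), of i 0] Suc.prems ne by simp
      ultimately show False using l(1) by simp
    qed
  qed
  then have "adj (T - {{last vs, hd vs}}) (vs ! i) (vs ! Suc i)" using a unfolding adj_def by simp
  then show ?case using Suc by (meson Suc_lessD rtranclp.rtrancl_into_rtrancl)
qed

lemma conn_card_acyclic:
  assumes p: "proper n T" and c: "conn n T" and cd: "card T + 1 = n"
  shows "\<nexists>vs. is_cycle T vs"
proof
  assume "\<exists>vs. is_cycle T vs"
  then obtain vs where cy: "is_cycle T vs" by blast
  define e where "e = {last vs, hd vs}"
  have eT: "e \<in> T" using cy unfolding is_cycle_def adj_def e_def by simp
  have ne: "vs \<noteq> []" using cy unfolding is_cycle_def by auto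
  have "(adj (T - {e}))\<^sup>*\<^sup>* (hd vs) (last vs)"
    using cycle_path[OF cy, of "length vs - 1"] ne e_def by (simp add: last_conv_nth)
  then have pa: "(adj (T - {e}))\<^sup>*\<^sup>* x y" if "{x, y} = e" for x y
    using that rtc_sym unfolding e_def by (metis doubleton_eq_iff)
  have "conn n (T - {e})"
    unfolding conn_def
  proof (intro allI impI)
    fix u v assume "u < n" "v < n"
    then have "(adj T)\<^sup>*\<^sup>* u v" using c unfolding conn_def by auto
    then show "(adj (T - {e}))\<^sup>*\<^sup>* u v"
      using rtc_hom[of T "T - {e}" id] pa unfolding adj_def
      by (metis (no_types, lifting) DiffI id_apply r_into_rtranclp singletonD)
  qed
  moreover have "proper n (T - {e})" using p unfolding proper_def by auto
  moreover have "n \<ge> 1" using cd by simp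
  ultimately have "n \<le> card (T - {e}) + 1" using conn_card_lb by blast
  moreover have "card (T - {e}) + 1 = card T" using eT proper_finite[OF p]
    by (metis card_Suc_Diff1 Suc_eq_plus1)
  ultimately show False using cd by simp
qed

lemma is_tree_iff:
  assumes "n \<ge> 1"
  shows "is_tree n T \<longleftrightarrow> proper n T \<and> conn n T \<and> card T + 1 = n"
proof
  assume "is_tree n T"
  then show "proper n T \<and> conn n T \<and> card T + 1 = n"
    using tree_proper tree_conn tree_card assms by blast
next
  assume h: "proper n T \<and> conn n T \<and> card T + 1 = n"
  then have "\<nexists>vs. is_cycle T vs" using conn_card_acyclic by blast
  then show "is_tree n T" using h unfolding is_tree_def proper_def conn_def by blast
qed

lemma edges_at: "proper n T \<Longrightarrow> {e \<in> T. s \<in> e} = (\<lambda>x. {s, x}) ` nbrs T s"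
proof (intro equalityI subsetI)
  fix e assume p: "proper n T" and e: "e \<in> {e \<in> T. s \<in> e}"
  then obtain u v where uv: "e = {u, v}" using proper_edge[OF p] by blast
  have eT: "e \<in> T" "s \<in> e" using e by auto
  show "e \<in> (\<lambda>x. {s, x}) ` nbrs T s"
  proof (cases "s = u")
    case True
    then have "v \<in> nbrs T s" "e = {s, v}" using eT uv unfolding nbrs_def by auto
    then show ?thesis by blast
  next
    case False
    then have "s = v" using eT uv by auto
    then have "e = {s, u}" using uv by (simp add: insert_commute)
    then have "u \<in> nbrs T s" "e = {s, u}" using eT unfolding nbrs_def by auto
    then show ?thesis by blast
  qed
next
  fix e assume "e \<in> (\<lambda>x. {s, x}) ` nbrs T s"
  then show "e \<in> {e \<in> T. s \<in> e}" unfolding nbrs_def by auto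
qed

lemma card_edges_at: "proper n T \<Longrightarrow> card {e \<in> T. s \<in> e} = deg T s"
proof -
  assume p: "proper n T"
  have "inj_on (\<lambda>x. {s, x}) (nbrs T s)" by (rule inj_onI) (auto simp: doubleton_eq_iff)
  then show ?thesis using edges_at[OF p] unfolding deg_def by (simp add: card_image)
qed

lemma handshake:
  assumes p: "proper n T"
  shows "(\<Sum>v<n. deg T v) = 2 * card T"
proof -
  have fT: "finite T" using proper_finite[OF p] .
  have "(\<Sum>v<n. deg T v) = (\<Sum>v<n. \<Sum>e\<in>T. if v \<in> e then 1 else 0)"
  proof (rule sum.cong[OF refl])
    fix v assume "v \<in> {..<n}"
    have "deg T v = card {e \<in> T. v \<in> e}" using card_edges_at[OF p] by simp
    also have "\<dots> = (\<Sum>e\<in>{e \<in> T. v \<in> e}. 1)" by (rule card_eq_sum)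
    also have "\<dots> = (\<Sum>e\<in>T. if v \<in> e then 1 else 0)"
      by (rule sum.inter_filter[OF fT])
    finally show "deg T v = (\<Sum>e\<in>T. if v \<in> e then 1 else 0)" .
  qed
  also have "\<dots> = (\<Sum>e\<in>T. \<Sum>v<n. if v \<in> e then 1 else 0)" by (rule sum.swap)
  also have "\<dots> = (\<Sum>e\<in>T. 2)"
  proof (rule sum.cong[OF refl])
    fix e assume "e \<in> T"
    then obtain u v where uv: "e = {u, v}" "u \<noteq> v" "u < n" "v < n" using proper_edge[OF p] by blast
    have "(\<Sum>x<n. if x \<in> e then 1 else 0) = (\<Sum>x\<in>{x \<in> {..<n}. x \<in> e}. 1::nat)"
      by (rule sum.inter_filter[symmetric]) simp
    also have "\<dots> = card {x \<in> {..<n}. x \<in> e}" by (rule card_eq_sum[symmetric])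
    also have "{x \<in> {..<n}. x \<in> e} = {u, v}" using uv by auto
    finally show "(\<Sum>x<n. if x \<in> e then 1 else 0) = (2::nat)" using uv by simp
  qed
  finally show ?thesis by simp
qed

lemma tree_deg_pos:
  assumes t: "is_tree n T" and n: "n \<ge> 2" and v: "v < n"
  shows "deg T v \<ge> 1"
proof -
  have p: "proper n T" and c: "conn n T" using tree_proper tree_conn t by auto
  obtain u where u: "u < n" "u \<noteq> v" using n v by (metis One_nat_def less_2_cases_iff less_le_trans not_less_eq)
  have "(adj T)\<^sup>*\<^sup>* v u" using c u v unfolding conn_def by auto
  then obtain z where "adj T v z" using u(2) by (metis converse_rtranclpE)
  then have "nbrs T v \<noteq> {}" using nbrs_adj by blast
  then show ?thesis unfolding deg_def using nbrs_finite[OF p] by (simp add: Suc_leI card_gt_0_iff)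
qed

lemma tree_low_deg:
  assumes t: "is_tree n T" and n: "n \<ge> 2"
  shows "n + 2 \<le> 2 * card {v. v < n \<and> deg T v \<le> 2}"
proof -
  have p: "proper n T" using tree_proper t by auto
  let ?A = "{v. v < n \<and> deg T v \<le> 2}"
  let ?B = "{v. v < n \<and> \<not> deg T v \<le> 2}"
  have fA: "finite ?A" "finite ?B" by auto
  have AB: "{..<n} = ?A \<union> ?B" "?A \<inter> ?B = {}" by auto
  have "(\<Sum>v<n. deg T v) = (\<Sum>v\<in>?A. deg T v) + (\<Sum>v\<in>?B. deg T v)"
    using sum.union_disjoint[OF fA AB(2)] AB(1) by simp
  moreover have "(\<Sum>v\<in>?A. deg T v) \<ge> (\<Sum>v\<in>?A. 1)"
    using tree_deg_pos[OF t n] by (intro sum_mono) auto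
  moreover have "(\<Sum>v\<in>?B. deg T v) \<ge> (\<Sum>v\<in>?B. 3)" by (intro sum_mono) auto
  moreover have "card ?A + card ?B = n" using card_Un_disjoint[OF fA AB(2)] AB(1) by (metis card_lessThan)
  moreover have "card T + 1 = n" using tree_card t n by simp
  ultimately show ?thesis using handshake[OF p] by simp
qed

lemma tree_small_deg:
  assumes t: "is_tree n T" and n: "n \<ge> 1"
  shows "n \<le> 2 * card {v. v < n \<and> deg T v \<le> 4}"
proof -
  have p: "proper n T" using tree_proper t by auto
  let ?A = "{v. v < n \<and> deg T v \<le> 4}"
  let ?B = "{v. v < n \<and> \<not> deg T v \<le> 4}"
  have fA: "finite ?A" "finite ?B" by auto
  have AB: "{..<n} = ?A \<union> ?B" "?A \<inter> ?B = {}" by auto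
  have "(\<Sum>v<n. deg T v) = (\<Sum>v\<in>?A. deg T v) + (\<Sum>v\<in>?B. deg T v)"
    using sum.union_disjoint[OF fA AB(2)] AB(1) by simp
  moreover have "(\<Sum>v\<in>?B. deg T v) \<ge> (\<Sum>v\<in>?B. 5)" by (intro sum_mono) auto
  moreover have "card ?A + card ?B = n" using card_Un_disjoint[OF fA AB(2)] AB(1) by (metis card_lessThan)
  moreover have "card T + 1 = n" using tree_card t n by simp
  ultimately show ?thesis using handshake[OF p] by simp
qed

lemma tree_bridge:
  assumes t: "is_tree n T" and e: "{x, y} \<in> T"
  shows "\<not> (adj (T - {{x, y}}))\<^sup>*\<^sup>* x y"
proof
  assume pa: "(adj (T - {{x, y}}))\<^sup>*\<^sup>* x y"
  have p: "proper n T" using tree_proper t by auto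
  have "x \<noteq> y" using proper_adj[OF p, of x y] e unfolding adj_def by simp
  then show False using cycle_of_nonbridge[OF e _ pa] t unfolding is_tree_def by blast
qed

lemma triangle_free:
  assumes t: "is_tree n T" and ab: "nbrs T s = {a, b}" "a \<noteq> b"
  shows "{a, b} \<notin> T"
proof
  assume ab': "{a, b} \<in> T"
  have p: "proper n T" using tree_proper t by auto
  have "a \<in> nbrs T s" "b \<in> nbrs T s" using ab(1) by auto
  then have sa: "{s, a} \<in> T" "{s, b} \<in> T" unfolding nbrs_def by auto
  have "s \<noteq> a" using proper_adj[OF p, of s a] sa unfolding adj_def by auto
  then have "adj (T - {{s, b}}) s a" "adj (T - {{s, b}}) a b"
    using sa ab' ab(2) unfolding adj_def by (auto simp: doubleton_eq_iff)
  then have "(adj (T - {{s, b}}))\<^sup>*\<^sup>* s b" by (meson r_into_rtranclp rtranclp_trans)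
  then show False using tree_bridge[OF t sa(2)] by simp
qed

subsection \<open>The switching step\<close>

definition step :: "nat set set \<Rightarrow> nat \<Rightarrow> nat \<Rightarrow> nat set set" where
  "step T w s = (T - {e \<in> T. s \<in> e}) \<union> {{s, w}} \<union> (if deg T s = 2 then {nbrs T s} else {})"

definition valid :: "nat \<Rightarrow> nat set set \<Rightarrow> nat \<Rightarrow> nat set" where
  "valid n T w = {s. s < n \<and> 1 \<le> deg T s \<and> deg T s \<le> 2 \<and> s \<noteq> w \<and> \<not> adj T s w}"

definition undo :: "nat set set \<Rightarrow> nat \<Rightarrow> nat \<Rightarrow> nat set \<Rightarrow> nat set set" where
  "undo T' w s N = (T' - {{s, w}} - {N}) \<union> ((\<lambda>x. {s, x}) ` N)"

lemma nbrs_2: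
  assumes p: "proper n T" and d: "deg T s = 2"
  obtains a b where "nbrs T s = {a, b}" "a \<noteq> b" "a < n" "b < n" "a \<noteq> s" "b \<noteq> s"
proof -
  obtain a b where ab: "nbrs T s = {a, b}" "a \<noteq> b" using d unfolding deg_def by (meson card_2_iff)
  then have "adj T s a" "adj T s b" using nbrs_adj by blast+
  then show ?thesis using that ab proper_adj[OF p] by blast
qed

lemma nbrs_1:
  assumes p: "proper n T" and d: "deg T s = 1"
  obtains a where "nbrs T s = {a}" "a < n" "a \<noteq> s"
proof -
  obtain a where ab: "nbrs T s = {a}" using d unfolding deg_def by (meson card_1_singletonE)
  then have "adj T s a" using nbrs_adj by blast
  then show ?thesis using that ab proper_adj[OF p] by blast
qed

lemma s_notin_nbrs: "proper n T \<Longrightarrow> s \<notin> nbrs T s"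
  using proper_adj nbrs_adj by blast

lemma proper_Un: "proper n A \<Longrightarrow> proper n B \<Longrightarrow> proper n (A \<union> B)"
  unfolding proper_def by (rule Un_least)

lemma step_tree:
  assumes t: "is_tree n T" and n: "n \<ge> 2" and w: "w < n" and s: "s \<in> valid n T w"
  shows "is_tree n (step T w s)"
proof -
  have p: "proper n T" and c: "conn n T" using tree_proper tree_conn t by auto
  have fT: "finite T" using proper_finite[OF p] .
  have sn: "s < n" "s \<noteq> w" "\<not> adj T s w" "1 \<le> deg T s" "deg T s \<le> 2" using s unfolding valid_def by auto
  let ?E = "{e \<in> T. s \<in> e}"
  let ?X = "if deg T s = 2 then {nbrs T s} else {}"
  have st: "step T w s = (T - ?E) \<union> {{s, w}} \<union> ?X" unfolding step_def by simp
  have prp: "proper n (step T w s)"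
  proof -
    have "proper n (T - ?E)" using p unfolding proper_def by auto
    moreover have "proper n {{s, w}}" using sn w unfolding proper_def by auto
    moreover have "proper n ?X"
    proof (cases "deg T s = 2")
      case True
      then obtain a b where "nbrs T s = {a, b}" "a \<noteq> b" "a < n" "b < n" using nbrs_2[OF p] by metis
      then show ?thesis using True unfolding proper_def by auto
    qed (simp add: proper_def)
    ultimately show ?thesis using st proper_Un by metis
  qed
  have cE: "card ?E = deg T s" using card_edges_at[OF p] .
  have cTE: "card (T - ?E) = card T - deg T s" using cE fT by (simp add: card_Diff_subset)
  have sw: "{s, w} \<notin> T - ?E" by simp
  have cX: "card ((T - ?E) \<union> {{s, w}} \<union> ?X) = card T"
  proof (cases "deg T s = 2")
    case True
    then obtain a b where ab: "nbrs T s = {a, b}" "a \<noteq> b" "a \<noteq> s" "b \<noteq> s" using nbrs_2[OF p] by metis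
    have "{a, b} \<notin> T" using triangle_free[OF t ab(1,2)] .
    then have "nbrs T s \<notin> (T - ?E) \<union> {{s, w}}" using ab by (auto simp: doubleton_eq_iff)
    moreover have "card ?E \<le> card T" using fT by (simp add: card_mono)
    ultimately show ?thesis using True cTE sw fT cE by (simp add: card_insert_if)
  next
    case False
    then have "deg T s = 1" using sn by simp
    moreover have "card ?E \<le> card T" using fT by (simp add: card_mono)
    ultimately show ?thesis using False cTE sw fT cE by (simp add: card_insert_if)
  qed
  have "nbrs T s \<noteq> {}" using sn(4) unfolding deg_def by (metis card.empty not_one_le_zero)
  then obtain a0 where a0: "a0 \<in> nbrs T s" by blast
  define f where "f z = (if z = s then a0 else z)" for z
  have hom: "(adj (step T w s))\<^sup>*\<^sup>* (f x) (f y)" if a: "adj T x y" for x y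
  proof -
    have key: "(adj (step T w s))\<^sup>*\<^sup>* a0 y" if y: "y \<in> nbrs T s" for y
    proof (cases "y = a0")
      case True then show ?thesis by simp
    next
      case False
      have sub: "{a0, y} \<subseteq> nbrs T s" using a0 y by auto
      have c2: "card {a0, y} = 2" using False by simp
      have "2 \<le> deg T s" unfolding deg_def using card_mono[OF nbrs_finite[OF p] sub] c2 by simp
      then have "deg T s = 2" using sn(5) by simp
      moreover then have "nbrs T s = {a0, y}"
        using card_subset_eq[OF nbrs_finite[OF p] sub] c2 unfolding deg_def by simp
      ultimately have "adj (step T w s) a0 y" unfolding adj_def step_def by simp
      then show ?thesis by simp
    qed
    show ?thesis
    proof (cases "x = s")
      case True
      then have "y \<noteq> s" "y \<in> nbrs T s" using a proper_adj[OF p a] nbrs_adj by auto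
      then show ?thesis using key True f_def by simp
    next
      case xs: False
      show ?thesis
      proof (cases "y = s")
        case True
        then have "adj T s x" using a adj_sym[of T x y] by simp
        then have "x \<in> nbrs T s" using nbrs_adj by metis
        then show ?thesis using key True xs f_def rtc_sym by simp
      next
        case False
        then have "adj (step T w s) x y" using a xs unfolding adj_def step_def by auto
        then show ?thesis using False xs f_def by simp
      qed
    qed
  qed
  have tow: "(adj (step T w s))\<^sup>*\<^sup>* u w" if "u < n" for u
  proof (cases "u = s")
    case True
    then have "adj (step T w s) u w" unfolding adj_def step_def by simp
    then show ?thesis by simp
  next
    case False
    have "(adj T)\<^sup>*\<^sup>* u w" using c that w unfolding conn_def by auto
    then have "(adj (step T w s))\<^sup>*\<^sup>* (f u) (f w)" using rtc_hom[of T "step T w s" f] hom by blast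
    then show ?thesis using False sn(2) f_def by simp
  qed
  have "conn n (step T w s)" unfolding conn_def
  proof (intro allI impI)
    fix u v assume "u < n" "v < n"
    then have "(adj (step T w s))\<^sup>*\<^sup>* u w" "(adj (step T w s))\<^sup>*\<^sup>* w v" using tow rtc_sym by auto
    then show "(adj (step T w s))\<^sup>*\<^sup>* u v" by (rule rtranclp_trans)
  qed
  then show ?thesis using is_tree_iff[of n] n prp cX st tree_card[OF t] by simp
qed

lemma undo_step:
  assumes t: "is_tree n T" and w: "w < n" and s: "s \<in> valid n T w"
  shows "undo (step T w s) w s (nbrs T s) = T"
proof -
  have p: "proper n T" using tree_proper t by auto
  let ?E = "{e \<in> T. s \<in> e}"
  let ?X = "if deg T s = 2 then {nbrs T s} else {}"
  have nT: "nbrs T s \<notin> T - ?E"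
  proof (cases "deg T s = 2")
    case True
    then obtain a b where ab: "nbrs T s = {a, b}" "a \<noteq> b" using nbrs_2[OF p] by metis
    then show ?thesis using triangle_free[OF t ab] by simp
  next
    case False
    then have "deg T s = 1" using s unfolding valid_def by simp
    then obtain a where "nbrs T s = {a}" using nbrs_1[OF p] by metis
    then show ?thesis using proper_edge[OF p] by (auto simp: doubleton_eq_iff)
  qed
  have X: "?X \<subseteq> {nbrs T s}" by auto
  have sw: "{s, w} \<notin> T - ?E" by simp
  have A: "step T w s - {{s, w}} - {nbrs T s} = T - ?E"
  proof (intro equalityI subsetI)
    fix e assume "e \<in> step T w s - {{s, w}} - {nbrs T s}"
    then show "e \<in> T - ?E" using X unfolding step_def by blast
  next
    fix e assume e: "e \<in> T - ?E"
    then have "e \<noteq> {s, w}" "e \<noteq> nbrs T s" using sw nT by blast+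
    then show "e \<in> step T w s - {{s, w}} - {nbrs T s}" using e unfolding step_def by blast
  qed
  have B: "(\<lambda>x. {s, x}) ` nbrs T s = ?E" using edges_at[OF p, of s] by simp
  have "(T - ?E) \<union> ?E = T" by blast
  then show ?thesis unfolding undo_def A B .
qed

lemma nbrs_opts:
  assumes t: "is_tree n T" and s: "s \<in> valid n T w"
  shows "nbrs T s \<in> (\<lambda>p. {p}) ` {..<n} \<union> step T w s"
proof (cases "deg T s = 2")
  case True then show ?thesis unfolding step_def by simp
next
  case False
  have p: "proper n T" using tree_proper t by auto
  have "deg T s = 1" using s False unfolding valid_def by simp
  then obtain a where "nbrs T s = {a}" "a < n" using nbrs_1[OF p] by metis
  then show ?thesis by simp
qed

definition leafn :: "nat set set \<Rightarrow> nat \<Rightarrow> nat set" where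
  "leafn T r = {x. adj T r x \<and> deg T x = 1}"

definition badm :: "nat \<Rightarrow> nat \<Rightarrow> nat set set \<Rightarrow> bool" where
  "badm m n T \<longleftrightarrow> (\<forall>r<n. card (leafn T r) < m)"

definition rich :: "nat \<Rightarrow> nat \<Rightarrow> nat set set \<Rightarrow> nat set" where
  "rich m n T = {r. r < n \<and> m \<le> card (leafn T r)}"

definition symd :: "'a set \<Rightarrow> 'a set \<Rightarrow> 'a set" where
  "symd A B = (A - B) \<union> (B - A)"

lemma leafn_sub: "leafn T r \<subseteq> nbrs T r"
  unfolding leafn_def by (auto simp: nbrs_adj)

lemma leafn_finite: "proper n T \<Longrightarrow> finite (leafn T r)"
  using leafn_sub nbrs_finite finite_subset by metis

lemma symd_finite: "finite A \<Longrightarrow> finite B \<Longrightarrow> finite (symd A B)"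
  unfolding symd_def by auto

lemma symd_tri: "finite A \<Longrightarrow> finite B \<Longrightarrow> finite C \<Longrightarrow> card (symd A C) \<le> card (symd A B) + card (symd B C)"
proof -
  assume f: "finite A" "finite B" "finite C"
  have "symd A C \<subseteq> symd A B \<union> symd B C" unfolding symd_def by auto
  then have "card (symd A C) \<le> card (symd A B \<union> symd B C)"
    using f symd_finite by (meson card_mono finite_UnI)
  also have "\<dots> \<le> card (symd A B) + card (symd B C)" by (rule card_Un_le)
  finally show ?thesis .
qed

lemma rich_bound:
  assumes p0: "proper n T0" and p: "proper n T" and b: "badm m n T0"
  shows "card (rich m n T) \<le> 4 * card (symd T T0)"
proof -
  define D where "D = symd T T0"
  define P where "P = \<Union> D"
  define g where "g x = (SOME y. adj T x y)" for x
  have fD: "finite D" using D_def symd_finite proper_finite p p0 by metis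
  have eD: "card e = 2" if "e \<in> D" for e
  proof -
    have "e \<in> T \<or> e \<in> T0" using that unfolding D_def symd_def by auto
    then obtain u v where "e = {u, v}" "u \<noteq> v" using proper_edge[OF p] proper_edge[OF p0] by metis
    then show ?thesis by simp
  qed
  have fP: "finite P" unfolding P_def using fD eD
    by (metis card.infinite finite_Union zero_neq_numeral)
  have cP: "card P \<le> 2 * card D"
  proof -
    have "card P \<le> (\<Sum>e\<in>D. card e)" unfolding P_def by (rule card_Union_le_sum_card)
    also have "\<dots> = (\<Sum>e\<in>D. 2)" using eD by simp
    finally show ?thesis by simp
  qed
  have sub: "rich m n T \<subseteq> P \<union> g ` P"
  proof
    fix r assume r: "r \<in> rich m n T"
    then have rn: "r < n" and cm: "m \<le> card (leafn T r)" unfolding rich_def by auto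
    have "card (leafn T0 r) < m" using b rn unfolding badm_def by auto
    then have "\<not> leafn T r \<subseteq> leafn T0 r"
      using cm card_mono[OF leafn_finite[OF p0]] by (meson leD le_trans)
    then obtain x where x: "x \<in> leafn T r" "x \<notin> leafn T0 r" by blast
    have ax: "adj T r x" "deg T x = 1" using x(1) unfolding leafn_def by auto
    show "r \<in> P \<union> g ` P"
    proof (cases "adj T0 r x")
      case False
      then have "{r, x} \<in> D" using ax unfolding D_def symd_def adj_def by auto
      then show ?thesis unfolding P_def by blast
    next
      case True
      then have d0: "deg T0 x \<noteq> 1" using x(2) unfolding leafn_def by auto
      then have "nbrs T x \<noteq> nbrs T0 x" using ax(2) unfolding deg_def by metis
      then obtain y where "y \<in> nbrs T x \<and> y \<notin> nbrs T0 x \<or> y \<in> nbrs T0 x \<and> y \<notin> nbrs T x" by blast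
      then have "{x, y} \<in> D" unfolding D_def symd_def nbrs_def by auto
      then have xP: "x \<in> P" unfolding P_def by blast
      obtain z where z: "nbrs T x = {z}" using ax(2) unfolding deg_def by (meson card_1_singletonE)
      have "r \<in> nbrs T x" using ax(1) adj_sym nbrs_adj by metis
      then have "nbrs T x = {r}" using z by simp
      then have "g x = r" unfolding g_def using nbrs_adj by (metis singletonD singletonI someI_ex)
      then show ?thesis using xP by blast
    qed
  qed
  have "card (rich m n T) \<le> card (P \<union> g ` P)" using sub fP by (simp add: card_mono)
  also have "\<dots> \<le> card P + card (g ` P)" by (rule card_Un_le)
  also have "\<dots> \<le> card P + card P" using card_image_le[OF fP] by simp
  finally show ?thesis using cP D_def by simp
qed

lemma step_nbrs_w:
  assumes p: "proper n T" and s: "s \<in> valid n T w"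
  shows "nbrs (step T w s) w \<subseteq> insert s (nbrs T w)"
proof
  fix y assume "y \<in> nbrs (step T w s) w"
  then have y: "{w, y} \<in> step T w s" unfolding nbrs_def by simp
  have na: "\<not> adj T s w" using s unfolding valid_def by simp
  have "w \<notin> nbrs T s" using na nbrs_adj by metis
  then have "{w, y} \<noteq> nbrs T s" by auto
  then have "{w, y} \<in> T \<or> {w, y} = {s, w}" using y unfolding step_def by (auto split: if_splits)
  then show "y \<in> insert s (nbrs T w)" unfolding nbrs_def by (auto simp: doubleton_eq_iff)
qed

lemma step_leaf_s:
  assumes p: "proper n T" and s: "s \<in> valid n T w"
  shows "nbrs (step T w s) s = {w}"
proof -
  have sn: "s \<notin> nbrs T s" using s_notin_nbrs[OF p] .
  have "{s, y} \<in> step T w s \<longleftrightarrow> y = w" for y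
  proof
    assume "{s, y} \<in> step T w s"
    moreover have "{s, y} \<noteq> nbrs T s" using sn by auto
    ultimately have "{s, y} = {s, w}" unfolding step_def by (auto split: if_splits)
    then show "y = w" by (auto simp: doubleton_eq_iff)
  qed (simp add: step_def)
  then show ?thesis unfolding nbrs_def by auto
qed

lemma step_leaf_t:
  assumes p: "proper n T" and s: "s \<in> valid n T w" and t: "nbrs T t = {w}"
  shows "nbrs (step T w s) t = {w}"
proof -
  have sw: "s \<noteq> w" "\<not> adj T s w" using s unfolding valid_def by auto
  have ts: "t \<noteq> s" using t sw nbrs_adj adj_sym by (metis singletonI)
  have tw: "t \<noteq> w" using t s_notin_nbrs[OF p] by auto
  have tN: "t \<notin> nbrs T s"
  proof
    assume "t \<in> nbrs T s"
    then have "s \<in> nbrs T t" using nbrs_adj adj_sym by metis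
    then show False using t sw by simp
  qed
  have "{t, y} \<in> step T w s \<longleftrightarrow> y = w" for y
  proof
    assume y: "{t, y} \<in> step T w s"
    have "{t, y} \<noteq> nbrs T s" using tN by auto
    moreover have "{t, y} \<noteq> {s, w}" using ts tw by (auto simp: doubleton_eq_iff)
    ultimately have "{t, y} \<in> T" using y unfolding step_def by (auto split: if_splits)
    then show "y = w" using t unfolding nbrs_def by auto
  next
    assume "y = w"
    moreover have "{t, w} \<in> T" using t unfolding nbrs_def by auto
    moreover have "s \<notin> {t, w}" using ts sw by auto
    ultimately show "{t, y} \<in> step T w s" unfolding step_def by auto
  qed
  then show ?thesis unfolding nbrs_def by auto
qed

lemma step_symd:
  assumes p: "proper n T" and s: "s \<in> valid n T w"
  shows "card (symd T (step T w s)) \<le> 4"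
proof -
  let ?E = "{e \<in> T. s \<in> e}"
  let ?X = "if deg T s = 2 then {nbrs T s} else {}"
  have "symd T (step T w s) \<subseteq> ?E \<union> ({{s, w}} \<union> ?X)" unfolding symd_def step_def by auto
  moreover have "finite (?E \<union> ({{s, w}} \<union> ?X))" using proper_finite[OF p] by auto
  ultimately have "card (symd T (step T w s)) \<le> card (?E \<union> ({{s, w}} \<union> ?X))" by (simp add: card_mono)
  also have "\<dots> \<le> card ?E + card ({{s, w}} \<union> ?X)" by (rule card_Un_le)
  also have "card ({{s, w}} \<union> ?X) \<le> 2" by (auto simp: card_insert_if)
  also have "card ?E \<le> 2" using card_edges_at[OF p] s unfolding valid_def by simp
  finally show ?thesis by simp
qed

definition R :: "nat \<Rightarrow> nat set set \<times> nat \<times> nat set \<Rightarrow> nat set set \<times> nat \<times> nat set \<Rightarrow> bool" where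
  "R n x y \<longleftrightarrow> (\<exists>T w S s. x = (T, w, S) \<and> s \<in> valid n T w \<and> y = (step T w s, w, insert s S))"

fun Lv :: "nat \<Rightarrow> nat \<Rightarrow> nat \<Rightarrow> (nat set set \<times> nat \<times> nat set) set" where
  "Lv m n 0 = {(T, w, S). is_tree n T \<and> badm m n T \<and> w < n \<and> deg T w \<le> 4 \<and> S = {}}"
| "Lv m n (Suc i) = {y. \<exists>x\<in>Lv m n i. R n x y}"

definition Inv :: "nat \<Rightarrow> nat \<Rightarrow> nat \<Rightarrow> nat set set \<Rightarrow> nat \<Rightarrow> nat set \<Rightarrow> bool" where
  "Inv m n i T w S \<longleftrightarrow> is_tree n T \<and> w < n \<and> S \<subseteq> leafn T w \<and> card S = i \<and> finite S
     \<and> deg T w \<le> 4 + i \<and> (\<exists>T0. is_tree n T0 \<and> badm m n T0 \<and> card (symd T T0) \<le> 4 * i)"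

lemma symd_comm: "symd A B = symd B A"
  unfolding symd_def by auto

lemma leaf_nbrs: "x \<in> leafn T w \<Longrightarrow> nbrs T x = {w}"
proof -
  assume x: "x \<in> leafn T w"
  then have a: "adj T w x" "deg T x = 1" unfolding leafn_def by auto
  obtain z where z: "nbrs T x = {z}" using a(2) unfolding deg_def by (meson card_1_singletonE)
  have "w \<in> nbrs T x" using a(1) adj_sym nbrs_adj by metis
  then show ?thesis using z by simp
qed

lemma nbrs_leaf: "nbrs T x = {w} \<Longrightarrow> x \<in> leafn T w"
proof -
  assume x: "nbrs T x = {w}"
  then have "adj T x w" using nbrs_adj by (metis singletonI)
  then have "adj T w x" using adj_sym by metis
  moreover have "deg T x = 1" using x unfolding deg_def by simp
  ultimately show ?thesis unfolding leafn_def by simp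
qed

lemma Lv_inv:
  assumes n: "n \<ge> 2"
  shows "(T, w, S) \<in> Lv m n i \<Longrightarrow> Inv m n i T w S"
proof (induction i arbitrary: T w S)
  case 0
  then have "is_tree n T" "badm m n T" "w < n" "deg T w \<le> 4" "S = {}" by auto
  moreover have "card (symd T T) \<le> 4 * 0" unfolding symd_def by simp
  ultimately have "\<exists>T0. is_tree n T0 \<and> badm m n T0 \<and> card (symd T T0) \<le> 4 * 0" by blast
  then show ?case unfolding Inv_def using 0 by simp
next
  case (Suc i)
  then obtain x where x0: "x \<in> Lv m n i" "R n x (T, w, S)" by auto
  then obtain T1 w1 S1 s where xx: "x = (T1, w1, S1)" "s \<in> valid n T1 w1"
    and y: "(T, w, S) = (step T1 w1 s, w1, insert s S1)" unfolding R_def by blast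
  have x: "(T1, w1, S1) \<in> Lv m n i" "s \<in> valid n T1 w1" using x0 xx by auto
  have yy: "T = step T1 w1 s" "w = w1" "S = insert s S1" using y by auto
  have I: "Inv m n i T1 w1 S1" using Suc.IH x(1) by blast
  then have t1: "is_tree n T1" and w1: "w1 < n" and S1: "S1 \<subseteq> leafn T1 w1" "card S1 = i" "finite S1"
    and d1: "deg T1 w1 \<le> 4 + i" unfolding Inv_def by auto
  obtain T0 where T0: "is_tree n T0" "badm m n T0" "card (symd T1 T0) \<le> 4 * i" using I unfolding Inv_def by auto
  have p1: "proper n T1" using tree_proper t1 .
  have tr: "is_tree n T" using step_tree[OF t1 n w1 x(2)] yy by simp
  have sS: "s \<notin> S1"
  proof
    assume "s \<in> S1"
    then have "s \<in> nbrs T1 w1" using S1(1) leafn_sub by blast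
    then have "adj T1 w1 s" using nbrs_adj by metis
    then have "adj T1 s w1" using adj_sym by metis
    then show False using x(2) unfolding valid_def by simp
  qed
  have leaf: "S \<subseteq> leafn T w"
  proof
    fix t assume "t \<in> S"
    then have "t = s \<or> t \<in> S1" using yy by auto
    then show "t \<in> leafn T w"
    proof
      assume "t = s"
      have "nbrs T s = {w}" using step_leaf_s[OF p1 x(2)] yy by simp
      then show ?thesis using nbrs_leaf \<open>t = s\<close> by simp
    next
      assume "t \<in> S1"
      then have "nbrs T1 t = {w1}" using S1(1) leaf_nbrs by blast
      then have "nbrs T t = {w}" using step_leaf_t[OF p1 x(2)] yy by simp
      then show ?thesis using nbrs_leaf by simp
    qed
  qed
  have cS: "card S = Suc i" "finite S" using yy S1 sS by auto
  have "nbrs T w \<subseteq> insert s (nbrs T1 w1)" using step_nbrs_w[OF p1 x(2)] yy by simp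
  then have "deg T w \<le> card (insert s (nbrs T1 w1))"
    unfolding deg_def using nbrs_finite[OF p1] by (simp add: card_mono)
  also have "\<dots> \<le> Suc (deg T1 w1)" unfolding deg_def by (simp add: card_insert_le_m1 card_insert_if)
  finally have dg: "deg T w \<le> 4 + Suc i" using d1 by simp
  have fT: "finite T1" "finite T" "finite T0"
    using proper_finite tree_proper t1 tr T0(1) by blast+
  have "card (symd T T0) \<le> card (symd T T1) + card (symd T1 T0)" using symd_tri fT by blast
  also have "card (symd T T1) \<le> 4" using step_symd[OF p1 x(2)] yy symd_comm by metis
  finally have "card (symd T T0) \<le> 4 * Suc i" using T0(3) by simp
  then have ex: "\<exists>T0. is_tree n T0 \<and> badm m n T0 \<and> card (symd T T0) \<le> 4 * Suc i" using T0(1,2) by blast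
  have wn: "w < n" using w1 yy(2) by simp
  show ?case unfolding Inv_def using tr wn leaf cS dg ex by simp
qed

lemma trees_finite: "finite {T. is_tree n T}"
proof -
  have "{T. is_tree n T} \<subseteq> Pow (Pow {..<n})"
  proof
    fix T assume "T \<in> {T. is_tree n T}"
    then have "proper n T" using tree_proper by simp
    then have "\<forall>e\<in>T. e \<subseteq> {..<n}" using proper_edge by fastforce
    then show "T \<in> Pow (Pow {..<n})" by auto
  qed
  then show ?thesis by (meson finite_Pow_iff finite_lessThan finite_subset)
qed

lemma Lv_finite:
  assumes n: "n \<ge> 2"
  shows "finite (Lv m n i)"
proof -
  have "Lv m n i \<subseteq> {T. is_tree n T} \<times> {..<n} \<times> Pow {..<n}"
  proof
    fix x assume x: "x \<in> Lv m n i"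
    obtain T w S where xx: "x = (T, w, S)" by (cases x) auto
    then have I: "Inv m n i T w S" using Lv_inv[OF n] x by blast
    have "S \<subseteq> {..<n}"
    proof
      fix t assume "t \<in> S"
      then have "adj T w t" using I unfolding Inv_def leafn_def by auto
      moreover have "proper n T" using I tree_proper unfolding Inv_def by auto
      ultimately show "t \<in> {..<n}" using proper_adj by auto
    qed
    then show "x \<in> {T. is_tree n T} \<times> {..<n} \<times> Pow {..<n}" using I xx unfolding Inv_def by auto
  qed
  moreover have "finite ({T. is_tree n T} \<times> {..<n} \<times> Pow {..<n})" using trees_finite by simp
  ultimately show ?thesis by (rule finite_subset)
qed

lemma double_count:
  fixes A :: "'a set" and B :: "'b set"
  assumes fA: "finite A" and fB: "finite B"
    and a: "\<And>x. x \<in> A \<Longrightarrow> \<alpha> \<le> card {y \<in> B. Q x y}"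
    and b: "\<And>y. y \<in> B \<Longrightarrow> card {x \<in> A. Q x y} \<le> \<beta>"
  shows "card A * \<alpha> \<le> card B * \<beta>"
proof -
  have "card A * \<alpha> = (\<Sum>x\<in>A. \<alpha>)" by simp
  also have "\<dots> \<le> (\<Sum>x\<in>A. card {y \<in> B. Q x y})" using a by (rule sum_mono)
  also have "\<dots> = (\<Sum>x\<in>A. \<Sum>y\<in>B. if Q x y then 1 else 0)"
  proof (rule sum.cong[OF refl])
    fix x assume "x \<in> A"
    have "card {y \<in> B. Q x y} = (\<Sum>y\<in>{y \<in> B. Q x y}. 1)" by (rule card_eq_sum)
    also have "\<dots> = (\<Sum>y\<in>B. if Q x y then 1 else 0)" by (rule sum.inter_filter[OF fB])
    finally show "card {y \<in> B. Q x y} = (\<Sum>y\<in>B. if Q x y then 1 else 0)" .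
  qed
  also have "\<dots> = (\<Sum>y\<in>B. \<Sum>x\<in>A. if Q x y then 1 else 0)" by (rule sum.swap)
  also have "\<dots> = (\<Sum>y\<in>B. card {x \<in> A. Q x y})"
  proof (rule sum.cong[OF refl])
    fix y assume "y \<in> B"
    have "card {x \<in> A. Q x y} = (\<Sum>x\<in>{x \<in> A. Q x y}. 1)" by (rule card_eq_sum)
    also have "\<dots> = (\<Sum>x\<in>A. if Q x y then 1 else 0)" by (rule sum.inter_filter[OF fA])
    finally show "(\<Sum>x\<in>A. if Q x y then 1 else 0) = card {x \<in> A. Q x y}" by simp
  qed
  also have "\<dots> \<le> (\<Sum>y\<in>B. \<beta>)" using b by (rule sum_mono)
  also have "\<dots> = card B * \<beta>" by simp
  finally show ?thesis .
qed

lemma valid_card: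
  assumes n: "n \<ge> 2" and t: "is_tree n T" and w: "w < n" and d: "deg T w \<le> 4 + i" and i: "i < m"
  shows "(n + 2) div 2 - (m + 4) \<le> card (valid n T w)"
proof -
  have p: "proper n T" using tree_proper t .
  define D where "D = {v. v < n \<and> deg T v \<le> 2}"
  define X where "X = insert w (nbrs T w)"
  have fX: "finite X" unfolding X_def using nbrs_finite[OF p] by simp
  have sub: "D - X \<subseteq> valid n T w"
  proof
    fix v assume v: "v \<in> D - X"
    then have vn: "v < n" "deg T v \<le> 2" "v \<noteq> w" "v \<notin> nbrs T w" unfolding D_def X_def by auto
    have "\<not> adj T v w" using vn(4) nbrs_adj adj_sym by metis
    then show "v \<in> valid n T w" unfolding valid_def using vn tree_deg_pos[OF t n vn(1)] by simp
  qed
  have fv: "finite (valid n T w)" unfolding valid_def by simp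
  have "card X \<le> Suc (deg T w)" unfolding X_def deg_def using nbrs_finite[OF p] by (simp add: card_insert_if)
  then have cX: "card X \<le> m + 4" using d i by simp
  have "(n + 2) div 2 \<le> card D" using tree_low_deg[OF t n] unfolding D_def by simp
  then have "(n + 2) div 2 - (m + 4) \<le> card D - card X" using cX by simp
  also have "\<dots> \<le> card (D - X)" using fX by (rule diff_card_le_card_Diff)
  also have "\<dots> \<le> card (valid n T w)" using sub fv by (simp add: card_mono)
  finally show ?thesis .
qed

lemma level_step:
  assumes n: "n \<ge> 2" and i: "i < m"
  shows "card (Lv m n i) * ((n + 2) div 2 - (m + 4)) \<le> card (Lv m n (Suc i)) * (m * (2 * n))"
proof (rule double_count[where Q = "R n"])
  show "finite (Lv m n i)" by (rule Lv_finite[OF n])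
  show "finite (Lv m n (Suc i))" by (rule Lv_finite[OF n])
next
  fix x assume x: "x \<in> Lv m n i"
  obtain T w S where xx: "x = (T, w, S)" by (cases x) auto
  have I: "Inv m n i T w S" using Lv_inv[OF n] x xx by blast
  then have t: "is_tree n T" and w: "w < n" and S: "S \<subseteq> leafn T w" and d: "deg T w \<le> 4 + i"
    unfolding Inv_def by auto
  let ?F = "\<lambda>s. (step T w s, w, insert s S)"
  have notS: "s \<notin> S" if "s \<in> valid n T w" for s
  proof
    assume "s \<in> S"
    then have "s \<in> nbrs T w" using S leafn_sub by blast
    then have "adj T s w" using nbrs_adj adj_sym by metis
    then show False using that unfolding valid_def by simp
  qed
  have inj: "inj_on ?F (valid n T w)"
  proof (rule inj_onI)
    fix s s' assume "s \<in> valid n T w" "s' \<in> valid n T w" "?F s = ?F s'"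
    then have "insert s S = insert s' S" "s \<notin> S" "s' \<notin> S" using notS by auto
    then show "s = s'" by blast
  qed
  have sub: "?F ` valid n T w \<subseteq> {y \<in> Lv m n (Suc i). R n x y}"
  proof
    fix y assume "y \<in> ?F ` valid n T w"
    then obtain s where s: "s \<in> valid n T w" "y = ?F s" by blast
    then have "R n x y" unfolding R_def xx by blast
    moreover have "y \<in> Lv m n (Suc i)" using x \<open>R n x y\<close> by (simp only: Lv.simps) blast
    ultimately show "y \<in> {y \<in> Lv m n (Suc i). R n x y}" by blast
  qed
  have "finite {y \<in> Lv m n (Suc i). R n x y}" using Lv_finite[OF n, of m "Suc i"] by (simp del: Lv.simps)
  then have "card (valid n T w) \<le> card {y \<in> Lv m n (Suc i). R n x y}"
    using card_mono[OF _ sub] card_image[OF inj] by (simp del: Lv.simps)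
  then show "(n + 2) div 2 - (m + 4) \<le> card {y \<in> Lv m n (Suc i). R n x y}"
    using valid_card[OF n t w d i] by simp
next
  fix y assume y: "y \<in> Lv m n (Suc i)"
  obtain T' w S' where yy: "y = (T', w, S')" by (cases y) auto
  have I: "Inv m n (Suc i) T' w S'" using Lv_inv[OF n] y yy by blast
  then have t': "is_tree n T'" and cS: "card S' = Suc i" unfolding Inv_def by auto
  define Ops where "Ops = (\<lambda>p. {p}) ` {..<n} \<union> T'"
  define F where "F = (\<lambda>(s, N). (undo T' w s N, w, S' - {s}))"
  have sub: "{x \<in> Lv m n i. R n x y} \<subseteq> F ` (S' \<times> Ops)"
  proof
    fix x assume "x \<in> {x \<in> Lv m n i. R n x y}"
    then have x: "x \<in> Lv m n i" "R n x y" by auto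
    then obtain T w1 S s where xx: "x = (T, w1, S)" "s \<in> valid n T w1"
      and yy2: "y = (step T w1 s, w1, insert s S)" unfolding R_def by blast
    have e: "T' = step T w1 s" "w = w1" "S' = insert s S" using yy yy2 by auto
    have I0: "Inv m n i T w1 S" using Lv_inv[OF n] x(1) xx by blast
    then have t: "is_tree n T" and w1: "w1 < n" and S: "S \<subseteq> leafn T w1" unfolding Inv_def by auto
    have "s \<notin> S"
    proof
      assume "s \<in> S"
      then have "s \<in> nbrs T w1" using S leafn_sub by blast
      then have "adj T s w1" using nbrs_adj adj_sym by metis
      then show False using xx(2) unfolding valid_def by simp
    qed
    then have SS: "S = S' - {s}" using e by auto
    have U: "undo T' w s (nbrs T s) = T" using undo_step[OF t w1 xx(2)] e(1,2) by simp
    have "nbrs T s \<in> Ops" using nbrs_opts[OF t xx(2)] e unfolding Ops_def by simp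
    moreover have "s \<in> S'" using e by simp
    ultimately have "(s, nbrs T s) \<in> S' \<times> Ops" by simp
    moreover have "x = F (s, nbrs T s)" unfolding F_def using xx(1) U SS e(2) by simp
    ultimately show "x \<in> F ` (S' \<times> Ops)" by blast
  qed
  have fS: "finite S'" using I unfolding Inv_def by auto
  have fT': "finite T'" using proper_finite tree_proper t' by blast
  have fO: "finite Ops" unfolding Ops_def using fT' by simp
  have cT': "card T' + 1 = n" using tree_card t' n by simp
  have "card Ops \<le> card ((\<lambda>p. {p}) ` {..<n}) + card T'" unfolding Ops_def by (rule card_Un_le)
  also have "\<dots> \<le> n + card T'" using card_image_le[of "{..<n}" "\<lambda>p. {p}"] by simp
  finally have cO: "card Ops \<le> 2 * n" using cT' by simp
  have "card {x \<in> Lv m n i. R n x y} \<le> card (F ` (S' \<times> Ops))"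
    using sub fS fO by (simp add: card_mono)
  also have "\<dots> \<le> card (S' \<times> Ops)" using fS fO by (intro card_image_le) simp
  also have "\<dots> = Suc i * card Ops" using cS by (simp add: card_cartesian_product)
  also have "\<dots> \<le> m * (2 * n)" using i cO by (intro mult_le_mono) auto
  finally show "card {x \<in> Lv m n i. R n x y} \<le> m * (2 * n)" .
qed

lemma levels:
  assumes n: "n \<ge> 2"
  shows "i \<le> m \<Longrightarrow> card (Lv m n 0) * ((n + 2) div 2 - (m + 4)) ^ i \<le> card (Lv m n i) * (m * (2 * n)) ^ i"
proof (induction i)
  case 0 then show ?case by simp
next
  case (Suc i)
  let ?a = "(n + 2) div 2 - (m + 4)" and ?b = "m * (2 * n)"
  have "card (Lv m n 0) * ?a ^ Suc i = (card (Lv m n 0) * ?a ^ i) * ?a" by (simp only: power_Suc ac_simps)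
  also have "\<dots> \<le> (card (Lv m n i) * ?b ^ i) * ?a" using Suc.IH Suc.prems by (intro mult_le_mono1) simp
  also have "\<dots> = (card (Lv m n i) * ?a) * ?b ^ i" by (simp only: ac_simps)
  also have "\<dots> \<le> (card (Lv m n (Suc i)) * ?b) * ?b ^ i"
    using level_step[OF n, of i m] Suc.prems by (intro mult_le_mono1) (simp del: Lv.simps)
  also have "\<dots> = card (Lv m n (Suc i)) * ?b ^ Suc i" by (simp only: power_Suc ac_simps)
  finally show ?case .
qed

lemma Lv0_card:
  assumes n: "n \<ge> 2"
  shows "card {T. is_tree n T \<and> badm m n T} * n \<le> 2 * card (Lv m n 0)"
proof -
  let ?B = "{T. is_tree n T \<and> badm m n T}"
  let ?W = "\<lambda>T. {w. w < n \<and> deg T w \<le> 4}"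
  have eq: "Lv m n 0 = (\<lambda>(T, w). (T, w, {})) ` (Sigma ?B ?W)" by auto
  have inj: "inj_on (\<lambda>(T, w). (T, w, {} :: nat set)) (Sigma ?B ?W)" by (rule inj_onI) auto
  have fB: "finite ?B" using trees_finite by (rule rev_finite_subset) auto
  have "card (Lv m n 0) = card (Sigma ?B ?W)" unfolding eq using inj by (rule card_image)
  also have "\<dots> = (\<Sum>T\<in>?B. card (?W T))" using fB by (intro card_SigmaI) auto
  finally have c: "card (Lv m n 0) = (\<Sum>T\<in>?B. card (?W T))" .
  have "card ?B * n = (\<Sum>T\<in>?B. n)" by simp
  also have "\<dots> \<le> (\<Sum>T\<in>?B. 2 * card (?W T))"
    using tree_small_deg n by (intro sum_mono) auto
  also have "\<dots> = 2 * card (Lv m n 0)" using c by (simp add: sum_distrib_left)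
  finally show ?thesis .
qed

lemma Lvm_card:
  assumes n: "n \<ge> 2"
  shows "card (Lv m n m) \<le> card {T. is_tree n T \<and> \<not> badm m n T} * (16 * m * 2 ^ (4 + m))"
proof -
  let ?G = "{T. is_tree n T \<and> \<not> badm m n T}"
  let ?G' = "{T. is_tree n T \<and> \<not> badm m n T \<and> card (rich m n T) \<le> 16 * m}"
  let ?W = "\<lambda>T. {w \<in> rich m n T. deg T w \<le> 4 + m}"
  let ?Z = "Sigma ?G' (\<lambda>T. Sigma (?W T) (\<lambda>w. Pow (nbrs T w)))"
  have fG: "finite ?G" "finite ?G'" using trees_finite by (auto intro: rev_finite_subset)
  have fW: "finite (?W T)" for T unfolding rich_def by simp
  have sub: "Lv m n m \<subseteq> ?Z"
  proof
    fix x assume x: "x \<in> Lv m n m"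
    obtain T w S where xx: "x = (T, w, S)" by (cases x) auto
    have I: "Inv m n m T w S" using Lv_inv[OF n] x xx by blast
    then have t: "is_tree n T" and w: "w < n" and S: "S \<subseteq> leafn T w" "card S = m"
      and d: "deg T w \<le> 4 + m" unfolding Inv_def by auto
    obtain T0 where T0: "is_tree n T0" "badm m n T0" "card (symd T T0) \<le> 4 * m"
      using I unfolding Inv_def by auto
    have p: "proper n T" using tree_proper t .
    have "m \<le> card (leafn T w)" using S card_mono[OF leafn_finite[OF p]] by metis
    then have wr: "w \<in> rich m n T" unfolding rich_def using w by simp
    then have nb: "\<not> badm m n T" unfolding badm_def rich_def by auto
    have "card (rich m n T) \<le> 4 * card (symd T T0)"
      using rich_bound[OF tree_proper[OF T0(1)] p T0(2)] .
    then have cr: "card (rich m n T) \<le> 16 * m" using T0(3) by simp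
    have "S \<subseteq> nbrs T w" using S leafn_sub by blast
    then show "x \<in> ?Z" using xx t nb cr wr d by simp
  qed
  have fI: "finite (Sigma (?W T) (\<lambda>w. Pow (nbrs T w)))" if "T \<in> ?G'" for T
  proof -
    have "proper n T" using that tree_proper by simp
    then show ?thesis using fW nbrs_finite by auto
  qed
  have fZ: "finite ?Z" using fG(2) fI by (rule finite_SigmaI)
  have "card (Lv m n m) \<le> card ?Z" using sub fZ by (rule card_mono[rotated])
  also have "card ?Z = (\<Sum>T\<in>?G'. card (Sigma (?W T) (\<lambda>w. Pow (nbrs T w))))"
    using fI by (intro card_SigmaI[OF fG(2)]) blast
  also have "\<dots> = (\<Sum>T\<in>?G'. \<Sum>w\<in>?W T. card (Pow (nbrs T w)))"
  proof (rule sum.cong[OF refl])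
    fix T assume "T \<in> ?G'"
    then have "proper n T" using tree_proper by simp
    then show "card (Sigma (?W T) (\<lambda>w. Pow (nbrs T w))) = (\<Sum>w\<in>?W T. card (Pow (nbrs T w)))"
      using fW nbrs_finite by (intro card_SigmaI) auto
  qed
  also have "\<dots> \<le> (\<Sum>T\<in>?G'. \<Sum>w\<in>?W T. 2 ^ (4 + m))"
  proof (intro sum_mono)
    fix T w assume T: "T \<in> ?G'" and w: "w \<in> ?W T"
    have "proper n T" using T tree_proper by simp
    then have "finite (nbrs T w)" by (rule nbrs_finite)
    then have "card (Pow (nbrs T w)) = 2 ^ deg T w" unfolding deg_def by (rule card_Pow)
    also have "\<dots> \<le> 2 ^ (4 + m)" using w by (intro power_increasing) auto
    finally show "card (Pow (nbrs T w)) \<le> 2 ^ (4 + m)" .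
  qed
  also have "\<dots> = (\<Sum>T\<in>?G'. card (?W T) * 2 ^ (4 + m))" by simp
  also have "\<dots> \<le> (\<Sum>T\<in>?G'. 16 * m * 2 ^ (4 + m))"
  proof (intro sum_mono mult_le_mono1)
    fix T assume T: "T \<in> ?G'"
    have "card (?W T) \<le> card (rich m n T)" unfolding rich_def by (intro card_mono) auto
    then show "card (?W T) \<le> 16 * m" using T by simp
  qed
  also have "\<dots> = card ?G' * (16 * m * 2 ^ (4 + m))" by simp
  also have "\<dots> \<le> card ?G * (16 * m * 2 ^ (4 + m))"
    using fG by (intro mult_le_mono1 card_mono) auto
  finally show ?thesis .
qed

lemma bad_bound:
  assumes n: "n \<ge> 2" "n \<ge> 4 * m + 16"
  shows "card {T. is_tree n T \<and> badm m n T} * n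
           \<le> (2 * (16 * m * 2 ^ (4 + m)) * (8 * m) ^ m) * card {T. is_tree n T \<and> \<not> badm m n T}"
proof -
  let ?a = "(n + 2) div 2 - (m + 4)" and ?b = "m * (2 * n)"
  let ?B = "card {T. is_tree n T \<and> badm m n T}" and ?G = "card {T. is_tree n T \<and> \<not> badm m n T}"
  let ?K = "16 * m * 2 ^ (4 + m)"
  have a4: "n \<le> 4 * ?a" using n by linarith
  have "?B * n * ?a ^ m \<le> 2 * card (Lv m n 0) * ?a ^ m" using Lv0_card[OF n(1)] by (intro mult_le_mono1) simp
  also have "\<dots> = 2 * (card (Lv m n 0) * ?a ^ m)" by simp
  also have "\<dots> \<le> 2 * (card (Lv m n m) * ?b ^ m)" using levels[OF n(1), of m m] by simp
  also have "\<dots> \<le> 2 * (?G * ?K * ?b ^ m)" using Lvm_card[OF n(1), of m] by (intro mult_le_mono2 mult_le_mono1) simp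
  finally have main: "?B * n * ?a ^ m \<le> 2 * (?G * ?K * ?b ^ m)" .
  have "?B * n * n ^ m \<le> ?B * n * (4 * ?a) ^ m" using a4 by (intro mult_le_mono2 power_mono) auto
  also have "\<dots> = (?B * n * ?a ^ m) * 4 ^ m" by (simp add: power_mult_distrib)
  also have "\<dots> \<le> 2 * (?G * ?K * ?b ^ m) * 4 ^ m" using main by (rule mult_le_mono1)
  also have "\<dots> = 2 * ?G * ?K * (?b ^ m * 4 ^ m)" by (simp only: ac_simps)
  also have "?b ^ m * 4 ^ m = (8 * m) ^ m * n ^ m"
  proof -
    have "?b * 4 = (8 * m) * n" by simp
    then show ?thesis by (metis power_mult_distrib)
  qed
  also have "2 * ?G * ?K * ((8 * m) ^ m * n ^ m) = (2 * ?K * (8 * m) ^ m * ?G) * n ^ m"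
    by (simp only: ac_simps)
  finally have "(?B * n) * n ^ m \<le> (2 * ?K * (8 * m) ^ m * ?G) * n ^ m" by simp
  then show ?thesis using n by simp
qed

lemma star_tree:
  assumes n: "n \<ge> 1"
  shows "is_tree n ((\<lambda>v. {0, v}) ` {1..<n})"
proof -
  let ?T = "(\<lambda>v. {0, v}) ` {1..<n}"
  have p: "proper n ?T" unfolding proper_def
  proof
    fix e assume "e \<in> ?T"
    then obtain v where v: "e = {0, v}" "1 \<le> v" "v < n" by auto
    then have "e = {0, v} \<and> (0::nat) \<noteq> v \<and> 0 < n \<and> v < n" by simp
    then show "e \<in> {e. \<exists>u v. e = {u, v} \<and> u \<noteq> v \<and> u < n \<and> v < n}" by blast
  qed
  have c0: "(adj ?T)\<^sup>*\<^sup>* v 0" if "v < n" for v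
  proof (cases "v = 0")
    case False
    then have "adj ?T v 0" unfolding adj_def using that by (auto simp: insert_commute)
    then show ?thesis by simp
  qed simp
  have c: "conn n ?T" unfolding conn_def
  proof (intro allI impI)
    fix u v assume "u < n" "v < n"
    then have "(adj ?T)\<^sup>*\<^sup>* u 0" "(adj ?T)\<^sup>*\<^sup>* 0 v" using c0 rtc_sym by auto
    then show "(adj ?T)\<^sup>*\<^sup>* u v" by (rule rtranclp_trans)
  qed
  have inj: "inj_on (\<lambda>v. {0::nat, v}) {1..<n}" by (rule inj_onI) (auto simp: doubleton_eq_iff)
  have "card ?T = n - 1" using card_image[OF inj] by simp
  then have "card ?T + 1 = n" using n by simp
  then show ?thesis using is_tree_iff[OF n] p c by simp
qed

lemma trees_card_pos:
  assumes "n \<ge> 1" shows "card (trees n) > 0"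
proof -
  have "(\<lambda>v. {0, v}) ` {1..<n} \<in> trees n" using star_tree[OF assms] unfolding trees_def by simp
  then have "trees n \<noteq> {}" by blast
  moreover have "finite (trees n)" using trees_finite unfolding trees_def .
  ultimately show ?thesis by (simp add: card_gt_0_iff)
qed

lemma almost_all_good:
  assumes P: "\<And>n T. is_tree n T \<Longrightarrow> \<not> badm m n T \<Longrightarrow> P n T"
  shows "almost_all_trees P"
proof -
  define C where "C = real (2 * (16 * m * 2 ^ (4 + m)) * (8 * m) ^ m)"
  define f where "f n = real (card {T \<in> trees n. P n T}) / real (card (trees n))" for n
  have lo: "1 - C / real n \<le> f n" if n: "n \<ge> 4 * m + 16" for n
  proof -
    have n2: "n \<ge> 2" using n by simp
    let ?B = "{T. is_tree n T \<and> badm m n T}" and ?G = "{T. is_tree n T \<and> \<not> badm m n T}"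
    have fB: "finite ?B" "finite ?G" using trees_finite by (auto intro: rev_finite_subset)
    have tot: "card (trees n) = card ?B + card ?G"
    proof -
      have "trees n = ?B \<union> ?G" "?B \<inter> ?G = {}" unfolding trees_def by auto
      then show ?thesis using card_Un_disjoint[OF fB] by simp
    qed
    have pos: "card (trees n) > 0" using trees_card_pos n by simp
    have bb: "real (card ?B) * real n \<le> C * real (card ?G)"
      using bad_bound[OF n2 n] unfolding C_def by (simp only: of_nat_mult[symmetric] of_nat_le_iff)
    have C0: "C \<ge> 0" unfolding C_def by simp
    have "real (card ?G) \<le> real (card (trees n))" using tot by simp
    then have "C * real (card ?G) \<le> C * real (card (trees n))" using C0 by (rule mult_left_mono)
    then have "real (card ?B) * real n \<le> C * real (card (trees n))" using bb by linarith
    then have b1: "real (card ?B) / real (card (trees n)) \<le> C / real n"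
      using pos n by (simp add: field_simps)
    have "?G \<subseteq> {T \<in> trees n. P n T}" using P unfolding trees_def by auto
    moreover have "finite {T \<in> trees n. P n T}" using trees_finite unfolding trees_def by simp
    ultimately have "card ?G \<le> card {T \<in> trees n. P n T}" by (simp add: card_mono)
    then have "real (card ?G) / real (card (trees n)) \<le> f n"
      unfolding f_def using pos by (simp add: divide_right_mono)
    moreover have "real (card ?G) / real (card (trees n)) = 1 - real (card ?B) / real (card (trees n))"
    proof -
      have tp: "real (card (trees n)) > 0" using pos by simp
      have "real (card ?G) = real (card (trees n)) - real (card ?B)" using tot by simp
      then show ?thesis using tp by (simp add: diff_divide_distrib)
    qed
    ultimately show ?thesis using b1 by linarith
  qed
  have hi: "f n \<le> 1" for n
  proof -
    have "card {T \<in> trees n. P n T} \<le> card (trees n)"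
      using trees_finite unfolding trees_def by (intro card_mono) auto
    then show ?thesis unfolding f_def by (cases "card (trees n) = 0") (auto simp: divide_le_eq_1)
  qed
  have l1: "(\<lambda>n. 1 - C / real n) \<longlonglongrightarrow> 1"
    using tendsto_diff[OF tendsto_const lim_const_over_n[of C]] by simp
  have "f \<longlonglongrightarrow> 1"
  proof (rule tendsto_sandwich[OF _ _ l1 tendsto_const])
    show "\<forall>\<^sub>F n in sequentially. 1 - C / real n \<le> f n"
      using lo by (rule eventually_sequentiallyI)
    show "\<forall>\<^sub>F n in sequentially. f n \<le> 1" using hi by simp
  qed
  then show ?thesis unfolding almost_all_trees_def f_def .
qed

definition Aop :: "nat \<Rightarrow> (nat \<Rightarrow> nat \<Rightarrow> real) \<Rightarrow> (nat \<Rightarrow> real) \<Rightarrow> nat \<Rightarrow> real" where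
  "Aop n A x i = (\<Sum>j<n. A i j * x j)"

definition ip :: "nat \<Rightarrow> (nat \<Rightarrow> real) \<Rightarrow> (nat \<Rightarrow> real) \<Rightarrow> real" where
  "ip n x y = (\<Sum>i<n. x i * y i)"

definition cf :: "real \<Rightarrow> nat \<Rightarrow> complex" where
  "cf t k = (\<i> * complex_of_real t) ^ k / of_nat (fact k)"

definition N1 :: "nat \<Rightarrow> (nat \<Rightarrow> real) \<Rightarrow> real" where
  "N1 n x = (\<Sum>j<n. \<bar>x j\<bar>)"

definition KA :: "nat \<Rightarrow> (nat \<Rightarrow> nat \<Rightarrow> real) \<Rightarrow> real" where
  "KA n A = (\<Sum>i<n. \<Sum>j<n. \<bar>A i j\<bar>)"

lemma ip_sym_step:
  assumes sym: "\<And>i j. A i j = A j i"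
  shows "ip n x (Aop n A y) = ip n (Aop n A x) y"
proof -
  have "ip n x (Aop n A y) = (\<Sum>i<n. \<Sum>j<n. x i * A i j * y j)"
    unfolding ip_def Aop_def by (simp add: sum_distrib_left mult.assoc)
  also have "\<dots> = (\<Sum>j<n. \<Sum>i<n. x i * A i j * y j)" by (rule sum.swap)
  also have "\<dots> = (\<Sum>j<n. (\<Sum>i<n. A j i * x i) * y j)"
  proof (rule sum.cong[OF refl])
    fix j assume "j \<in> {..<n}"
    have "(\<Sum>i<n. x i * A i j * y j) = (\<Sum>i<n. A j i * x i * y j)"
      by (rule sum.cong[OF refl]) (simp add: sym[of _ j])
    then show "(\<Sum>i<n. x i * A i j * y j) = (\<Sum>i<n. A j i * x i) * y j"
      by (simp add: sum_distrib_right)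
  qed
  also have "\<dots> = ip n (Aop n A x) y" unfolding ip_def Aop_def by simp
  finally show ?thesis .
qed

lemma ip_sym:
  assumes sym: "\<And>i j. A i j = A j i"
  shows "ip n x ((Aop n A ^^ k) y) = ip n ((Aop n A ^^ k) x) y"
proof (induction k arbitrary: x y)
  case 0 then show ?case by simp
next
  case (Suc k)
  have "ip n x ((Aop n A ^^ Suc k) y) = ip n x ((Aop n A ^^ k) (Aop n A y))"
    by (simp only: funpow_Suc_right o_apply)
  also have "\<dots> = ip n ((Aop n A ^^ k) x) (Aop n A y)" by (rule Suc.IH)
  also have "\<dots> = ip n (Aop n A ((Aop n A ^^ k) x)) y" by (rule ip_sym_step[OF sym])
  also have "\<dots> = ip n ((Aop n A ^^ Suc k) x) y" by simp
  finally show ?case .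
qed

lemma ip_pow:
  assumes sym: "\<And>i j. A i j = A j i"
  shows "ip n ((Aop n A ^^ k) q) ((Aop n A ^^ j) q) = ip n q ((Aop n A ^^ (k + j)) q)"
proof -
  have "ip n ((Aop n A ^^ k) q) ((Aop n A ^^ j) q) = ip n q ((Aop n A ^^ k) ((Aop n A ^^ j) q))"
    by (rule ip_sym[OF sym, symmetric])
  also have "\<dots> = ip n q ((Aop n A ^^ (k + j)) q)" by (simp add: funpow_add)
  finally show ?thesis .
qed

lemma N1_nonneg: "N1 n x \<ge> 0"
  unfolding N1_def by (simp add: sum_nonneg)

lemma KA_nonneg: "KA n A \<ge> 0"
  unfolding KA_def by (simp add: sum_nonneg)

lemma abs_le_N1: "i < n \<Longrightarrow> \<bar>x i\<bar> \<le> N1 n x"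
  unfolding N1_def by (rule member_le_sum) auto

lemma N1_Aop: "N1 n (Aop n A x) \<le> KA n A * N1 n x"
proof -
  have "N1 n (Aop n A x) = (\<Sum>i<n. \<bar>\<Sum>j<n. A i j * x j\<bar>)" unfolding N1_def Aop_def by simp
  also have "\<dots> \<le> (\<Sum>i<n. \<Sum>j<n. \<bar>A i j\<bar> * N1 n x)"
  proof (intro sum_mono)
    fix i assume "i \<in> {..<n}"
    have "\<bar>\<Sum>j<n. A i j * x j\<bar> \<le> (\<Sum>j<n. \<bar>A i j * x j\<bar>)" by (rule sum_abs)
    also have "\<dots> \<le> (\<Sum>j<n. \<bar>A i j\<bar> * N1 n x)"
    proof (intro sum_mono)
      fix j assume "j \<in> {..<n}"
      then show "\<bar>A i j * x j\<bar> \<le> \<bar>A i j\<bar> * N1 n x"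
        using abs_le_N1[of j n x] by (simp add: abs_mult mult_left_mono)
    qed
    finally show "\<bar>\<Sum>j<n. A i j * x j\<bar> \<le> (\<Sum>j<n. \<bar>A i j\<bar> * N1 n x)" .
  qed
  also have "\<dots> = KA n A * N1 n x" unfolding KA_def by (simp add: sum_distrib_right)
  finally show ?thesis .
qed

lemma N1_pow: "N1 n ((Aop n A ^^ k) x) \<le> KA n A ^ k * N1 n x"
proof (induction k)
  case 0 then show ?case by simp
next
  case (Suc k)
  have "N1 n ((Aop n A ^^ Suc k) x) \<le> KA n A * N1 n ((Aop n A ^^ k) x)" using N1_Aop by simp
  also have "\<dots> \<le> KA n A * (KA n A ^ k * N1 n x)" using Suc KA_nonneg by (rule mult_left_mono)
  finally show ?case by (simp add: mult.assoc)
qed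

lemma norm_cf: "norm (cf t k) = \<bar>t\<bar> ^ k / fact k"
  unfolding cf_def by (simp add: norm_divide norm_mult norm_power)

lemma summ_v:
  assumes i: "i < n"
  shows "summable (\<lambda>k. norm (cf t k * complex_of_real ((Aop n A ^^ k) x i)))"
proof (rule summable_comparison_test'[where N = 0])
  let ?K = "\<bar>t\<bar> * KA n A"
  show "summable (\<lambda>k. N1 n x * (inverse (fact k) * ?K ^ k))"
    by (intro summable_mult summable_exp)
  fix k :: nat
  have "norm (norm (cf t k * complex_of_real ((Aop n A ^^ k) x i)))
        = \<bar>t\<bar> ^ k / fact k * \<bar>(Aop n A ^^ k) x i\<bar>"
    by (simp add: norm_mult norm_cf)
  also have "\<dots> \<le> \<bar>t\<bar> ^ k / fact k * (KA n A ^ k * N1 n x)"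
    using abs_le_N1[OF i, of "(Aop n A ^^ k) x"] N1_pow[where n=n and A=A and k=k and x=x]
    by (intro mult_left_mono) auto
  also have "\<dots> = N1 n x * (inverse (fact k) * ?K ^ k)"
    by (simp add: power_mult_distrib field_simps)
  finally show "norm (norm (cf t k * complex_of_real ((Aop n A ^^ k) x i))) \<le> N1 n x * (inverse (fact k) * ?K ^ k)" .
qed

lemma cf_S: "cf t k = (\<i> * complex_of_real t) ^ k /\<^sub>R fact k"
  unfolding cf_def by (simp add: scaleR_conv_of_real divide_inverse_commute)

lemma cnj_cf: "cnj (cf t k) = (- (\<i> * complex_of_real t)) ^ k /\<^sub>R fact k"
  unfolding cf_def by (simp add: scaleR_conv_of_real divide_inverse_commute)

lemma cf_conv: "(\<Sum>k\<le>N. cf t k * cnj (cf t (N - k))) = (if N = 0 then 1 else 0)"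
proof -
  let ?x = "\<i> * complex_of_real t"
  have "(\<Sum>k\<le>N. cf t k * cnj (cf t (N - k))) = (\<Sum>k\<le>N. (?x ^ k /\<^sub>R fact k) * ((- ?x) ^ (N - k) /\<^sub>R fact (N - k)))"
    unfolding cf_S[symmetric] cnj_cf[symmetric] ..
  also have "\<dots> = (?x + - ?x) ^ N /\<^sub>R fact N"
    using exp_series_add_commuting[of ?x "- ?x" N] by simp
  also have "\<dots> = (if N = 0 then 1 else 0)" by simp
  finally show ?thesis .
qed

lemma unit_bound:
  assumes sym: "\<And>i j. A i j = A j i"
  shows "\<exists>\<phi>. (\<lambda>k. cf t k * complex_of_real (ip n q ((Aop n A ^^ k) q))) sums \<phi> \<and> cmod \<phi> \<le> ip n q q"
proof -
  define v where "v k = (Aop n A ^^ k) q" for k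
  define a where "a i k = cf t k * complex_of_real (v k i)" for i k
  define b where "b i k = cnj (cf t k) * complex_of_real (v k i)" for i k
  define Y where "Y i = suminf (a i)" for i
  have sa: "summable (\<lambda>k. norm (a i k))" if "i < n" for i
    unfolding a_def v_def using summ_v[OF that] by blast
  have hs: "a i sums Y i" if "i < n" for i
    unfolding Y_def using summable_sums[OF summable_norm_cancel[OF sa[OF that]]] .
  have cab: "cnj (a i k) = b i k" for i k unfolding a_def b_def by simp
  have hb: "b i sums cnj (Y i)" if "i < n" for i
    using sums_cnj[THEN iffD2, OF hs[OF that]] cab by simp
  have sb: "summable (\<lambda>k. norm (b i k))" if "i < n" for i
  proof -
    have "norm (b i k) = norm (a i k)" for k using cab[of i k] by (metis complex_mod_cnj)
    then show ?thesis using sa[OF that] by simp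
  qed
  have cp: "(\<lambda>N. \<Sum>k\<le>N. a i k * b i (N - k)) sums (Y i * cnj (Y i))" if "i < n" for i
  proof -
    have "(\<lambda>N. \<Sum>k\<le>N. a i k * b i (N - k)) sums (suminf (a i) * suminf (b i))"
      by (rule Cauchy_product_sums[OF sa[OF that] sb[OF that]])
    moreover have "suminf (b i) = cnj (Y i)" using hb[OF that] by (rule sums_unique[symmetric])
    ultimately show ?thesis unfolding Y_def by simp
  qed
  have cps: "(\<lambda>N. \<Sum>i<n. \<Sum>k\<le>N. a i k * b i (N - k)) sums (\<Sum>i<n. Y i * cnj (Y i))"
    using cp by (intro sums_sum) simp
  have trm: "(\<Sum>i<n. \<Sum>k\<le>N. a i k * b i (N - k)) = (if N = 0 then complex_of_real (ip n q (v N)) else 0)" for N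
  proof -
    have "(\<Sum>i<n. \<Sum>k\<le>N. a i k * b i (N - k)) = (\<Sum>k\<le>N. \<Sum>i<n. a i k * b i (N - k))"
      by (rule sum.swap)
    also have "\<dots> = (\<Sum>k\<le>N. cf t k * cnj (cf t (N - k)) * complex_of_real (ip n q (v N)))"
    proof (rule sum.cong[OF refl])
      fix k assume k: "k \<in> {..N}"
      have "(\<Sum>i<n. a i k * b i (N - k)) = (\<Sum>i<n. cf t k * cnj (cf t (N - k)) * complex_of_real (v k i * v (N - k) i))"
        unfolding a_def b_def by (simp add: mult_ac)
      also have "\<dots> = cf t k * cnj (cf t (N - k)) * complex_of_real (ip n (v k) (v (N - k)))"
        unfolding ip_def by (simp add: sum_distrib_left)
      also have "ip n (v k) (v (N - k)) = ip n q (v N)"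
        unfolding v_def using ip_pow[OF sym, where n=n and k=k and q=q and j="N - k"] k by simp
      finally show "(\<Sum>i<n. a i k * b i (N - k)) = cf t k * cnj (cf t (N - k)) * complex_of_real (ip n q (v N))" .
    qed
    also have "\<dots> = (\<Sum>k\<le>N. cf t k * cnj (cf t (N - k))) * complex_of_real (ip n q (v N))"
      by (simp add: sum_distrib_right)
    also have "\<dots> = (if N = 0 then complex_of_real (ip n q (v N)) else 0)"
      by (simp only: cf_conv) simp
    finally show ?thesis .
  qed
  have "(\<lambda>N. if N = 0 then complex_of_real (ip n q (v N)) else 0) sums complex_of_real (ip n q (v 0))"
    by (rule sums_single)
  then have "(\<lambda>N. \<Sum>i<n. \<Sum>k\<le>N. a i k * b i (N - k)) sums complex_of_real (ip n q q)"
    unfolding trm v_def by simp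
  then have "(\<Sum>i<n. Y i * cnj (Y i)) = complex_of_real (ip n q q)"
    using cps sums_unique2 by blast
  moreover have "Y i * cnj (Y i) = complex_of_real ((cmod (Y i))\<^sup>2)" for i
    by (rule complex_norm_square[symmetric])
  ultimately have "complex_of_real (\<Sum>i<n. (cmod (Y i))\<^sup>2) = complex_of_real (ip n q q)"
    by simp
  then have ny: "(\<Sum>i<n. (cmod (Y i))\<^sup>2) = ip n q q" using of_real_eq_iff by blast
  define \<phi> where "\<phi> = (\<Sum>i<n. complex_of_real (q i) * Y i)"
  have "(\<lambda>k. \<Sum>i<n. complex_of_real (q i) * a i k) sums \<phi>"
    unfolding \<phi>_def using hs by (intro sums_sum sums_mult) simp
  moreover have "(\<Sum>i<n. complex_of_real (q i) * a i k) = cf t k * complex_of_real (ip n q ((Aop n A ^^ k) q))" for k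
    unfolding a_def ip_def v_def by (simp add: sum_distrib_left mult_ac)
  ultimately have s: "(\<lambda>k. cf t k * complex_of_real (ip n q ((Aop n A ^^ k) q))) sums \<phi>" by simp
  have "cmod \<phi> \<le> (\<Sum>i<n. cmod (complex_of_real (q i) * Y i))" unfolding \<phi>_def by (rule norm_sum)
  also have "\<dots> = (\<Sum>i<n. \<bar>q i\<bar> * cmod (Y i))" by (simp add: norm_mult)
  also have "\<dots> \<le> (\<Sum>i<n. ((q i)\<^sup>2 + (cmod (Y i))\<^sup>2) / 2)"
  proof (rule sum_mono)
    fix i
    have "0 \<le> (\<bar>q i\<bar> - cmod (Y i))\<^sup>2" by simp
    then show "\<bar>q i\<bar> * cmod (Y i) \<le> ((q i)\<^sup>2 + (cmod (Y i))\<^sup>2) / 2"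
      by (simp add: power2_eq_square algebra_simps)
  qed
  also have "\<dots> = ((\<Sum>i<n. (q i)\<^sup>2) + (\<Sum>i<n. (cmod (Y i))\<^sup>2)) / 2"
    by (simp only: sum_divide_distrib[symmetric] sum.distrib)
  also have "\<dots> = ip n q q" using ny unfolding ip_def by (simp add: power2_eq_square)
  finally show ?thesis using s by blast
qed

lemma mpow_Aop:
  assumes u: "u < n"
  shows "(\<Sum>j<n. mpow n (\<lambda>i j. complex_of_real (A i j)) k u j * complex_of_real (x j))
         = complex_of_real ((Aop n A ^^ k) x u)"
proof (induction k arbitrary: x)
  case 0
  have "(\<Sum>j<n. (if u = j then 1 else 0) * complex_of_real (x j))
      = (\<Sum>j<n. if u = j then complex_of_real (x j) else 0)" by (rule sum.cong) auto
  also have "\<dots> = complex_of_real (x u)" using u by (simp add: sum.delta')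
  finally have "(\<Sum>j<n. (if u = j then 1 else 0) * complex_of_real (x j)) = complex_of_real (x u)" .
  then show ?case by simp
next
  case (Suc k)
  let ?B = "\<lambda>i j. complex_of_real (A i j)"
  have "(\<Sum>j<n. mpow n ?B (Suc k) u j * complex_of_real (x j))
      = (\<Sum>j<n. \<Sum>l<n. mpow n ?B k u l * ?B l j * complex_of_real (x j))"
    by (simp add: sum_distrib_right)
  also have "\<dots> = (\<Sum>l<n. \<Sum>j<n. mpow n ?B k u l * ?B l j * complex_of_real (x j))" by (rule sum.swap)
  also have "\<dots> = (\<Sum>l<n. mpow n ?B k u l * complex_of_real (Aop n A x l))"
    unfolding Aop_def by (simp add: sum_distrib_left mult.assoc)
  also have "\<dots> = complex_of_real ((Aop n A ^^ k) (Aop n A x) u)" by (rule Suc.IH)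
  also have "\<dots> = complex_of_real ((Aop n A ^^ Suc k) x u)" by (simp only: funpow_Suc_right o_apply)
  finally show ?case .
qed

lemma Aop_add: "Aop n A (\<lambda>j. x j + y j) = (\<lambda>i. Aop n A x i + Aop n A y i)"
  unfolding Aop_def by (simp add: distrib_left sum.distrib)

lemma Aop_pow_add: "(Aop n A ^^ k) (\<lambda>j. x j + y j) = (\<lambda>i. (Aop n A ^^ k) x i + (Aop n A ^^ k) y i)"
proof (induction k)
  case 0 then show ?case by simp
next
  case (Suc k) then show ?case by (simp add: Aop_add)
qed

lemma Aop_zero: "Aop n A (\<lambda>j. 0) = (\<lambda>i. 0)"
  unfolding Aop_def by simp

lemma Aop_pow_zero: "(Aop n A ^^ k) (\<lambda>j. 0) = (\<lambda>i. 0)"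
  by (induction k) (simp_all add: Aop_zero)

lemma ip_add: "ip n (\<lambda>j. x j + y j) z = ip n x z + ip n y z"
  unfolding ip_def by (simp add: distrib_right sum.distrib)

lemma ip_unit: "u < n \<Longrightarrow> ip n (\<lambda>j. if j = u then 1 else 0) z = z u"
proof -
  assume u: "u < n"
  have "ip n (\<lambda>j. if j = u then 1 else 0) z = (\<Sum>j<n. if j = u then z j else 0)"
    unfolding ip_def by (rule sum.cong) auto
  also have "\<dots> = z u" using u by (simp add: sum.delta)
  finally show ?thesis .
qed

lemma sed_crit:
  assumes sym: "\<And>i j. A i j = A j i" and u: "u < n"
    and ker: "Aop n A (\<lambda>j. (if j = u then 1 else 0) - q j) = (\<lambda>i. 0)"
    and G: "2 * ip n q q < 1"
  shows "sedentary n A u"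
proof -
  define e where "e j = (if j = u then 1 else (0::real))" for j
  define p where "p j = e j - q j" for j
  define G where "G = ip n q q"
  have epq: "e = (\<lambda>j. p j + q j)" unfolding p_def by auto
  have Ap: "Aop n A p = (\<lambda>i. 0)" using ker unfolding p_def e_def .
  have Akp: "(Aop n A ^^ Suc k) p = (\<lambda>i. 0)" for k
    by (simp only: funpow_Suc_right o_apply Ap Aop_pow_zero)
  have G0: "G \<ge> 0" unfolding G_def ip_def by (simp add: sum_nonneg)
  have coef: "(Aop n A ^^ k) e u = ip n q ((Aop n A ^^ k) q) + (if k = 0 then 1 - G else 0)" for k
  proof (cases k)
    case 0 then show ?thesis unfolding e_def G_def by simp
  next
    case (Suc k')
    have h1: "(Aop n A ^^ k) e = (Aop n A ^^ k) q"
      unfolding epq Aop_pow_add using Akp Suc by simp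
    have "(Aop n A ^^ k) e u = ip n e ((Aop n A ^^ k) e)" using ip_unit[OF u] unfolding e_def by simp
    also have "\<dots> = ip n e ((Aop n A ^^ k) q)" using h1 by simp
    also have "ip n e ((Aop n A ^^ k) q) = ip n p ((Aop n A ^^ k) q) + ip n q ((Aop n A ^^ k) q)"
      unfolding epq by (rule ip_add)
    also have "ip n p ((Aop n A ^^ k) q) = ip n ((Aop n A ^^ k) p) q" by (rule ip_sym[OF sym])
    also have "\<dots> = 0" using Akp Suc unfolding ip_def by simp
    finally show ?thesis using Suc by simp
  qed
  have mp: "mpow n (\<lambda>i j. complex_of_real (A i j)) k u u = complex_of_real ((Aop n A ^^ k) e u)" for k
  proof -
    have "(\<Sum>j<n. mpow n (\<lambda>i j. complex_of_real (A i j)) k u j * complex_of_real (e j))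
          = mpow n (\<lambda>i j. complex_of_real (A i j)) k u u"
    proof -
      have "(\<Sum>j<n. mpow n (\<lambda>i j. complex_of_real (A i j)) k u j * complex_of_real (e j))
          = (\<Sum>j<n. if j = u then mpow n (\<lambda>i j. complex_of_real (A i j)) k u j else 0)"
        unfolding e_def by (rule sum.cong) auto
      also have "\<dots> = mpow n (\<lambda>i j. complex_of_real (A i j)) k u u" using u by (simp add: sum.delta)
      finally show ?thesis .
    qed
    then show ?thesis using mpow_Aop[OF u, of A k e] by simp
  qed
  have bound: "cmod (U n A t u u) \<ge> 1 - 2 * G" for t
  proof -
    obtain \<phi> where s: "(\<lambda>k. cf t k * complex_of_real (ip n q ((Aop n A ^^ k) q))) sums \<phi>"
      and b: "cmod \<phi> \<le> G" using unit_bound[where A=A and t=t and n=n and q=q] sym unfolding G_def by blast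
    have s2: "(\<lambda>k. if k = 0 then complex_of_real (1 - G) else 0) sums complex_of_real (1 - G)"
      using sums_single[of 0 "\<lambda>_. complex_of_real (1 - G)"] by simp
    have "(\<lambda>k. cf t k * complex_of_real (ip n q ((Aop n A ^^ k) q)) + (if k = 0 then complex_of_real (1 - G) else 0))
            sums (\<phi> + complex_of_real (1 - G))" using sums_add[OF s s2] .
    moreover have "cf t k * complex_of_real (ip n q ((Aop n A ^^ k) q)) + (if k = 0 then complex_of_real (1 - G) else 0)
          = (\<i> * complex_of_real t) ^ k / of_nat (fact k) * mpow n (\<lambda>i j. complex_of_real (A i j)) k u u" for k
      using mp[of k] coef[of k] unfolding cf_def by (cases k) auto
    ultimately have "U n A t u u = \<phi> + complex_of_real (1 - G)"
      unfolding U_def using sums_unique by (metis (no_types, lifting) ext)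
    then have "cmod (U n A t u u) \<ge> cmod (complex_of_real (1 - G)) - cmod \<phi>"
      by (metis add.commute norm_diff_ineq)
    moreover have "cmod (complex_of_real (1 - G)) = 1 - G"
    proof -
      have "1 - G \<ge> 0" using G G_def G0 by simp
      then show ?thesis by (simp only: norm_of_real abs_of_nonneg)
    qed
    ultimately show ?thesis using b by simp
  qed
  define C where "C = 1 - 2 * G"
  have C: "0 < C" "C \<le> 1" using G G0 unfolding C_def G_def by auto
  have "C \<le> (INF t\<in>{0<..}. cmod (U n A t u u))"
    by (rule cINF_greatest) (use bound C_def in auto)
  then show ?thesis unfolding sedentary_def using C by blast
qed

lemma wadj_sym: "wadj T w i j = wadj T w j i"
  unfolding wadj_def by (simp add: insert_commute)

lemma leaf_sed:
  assumes p: "proper n T" and wz: "\<forall>e\<in>T. w e \<noteq> 0" and r: "r < n"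
    and u: "u \<in> leafn T r"
    and lt: "2 * (w {r, u})\<^sup>2 < (\<Sum>l\<in>leafn T r. (w {r, l})\<^sup>2)"
  shows "sedentary n (wadj T w) u"
proof -
  define F where "F = leafn T r"
  define a where "a l = w {r, l}" for l
  define S where "S = (\<Sum>l\<in>F. (a l)\<^sup>2)"
  define q where "q j = (a u / S) * (if j \<in> F then a j else 0)" for j
  have fF: "finite F" unfolding F_def using leafn_finite[OF p] .
  have Fn: "F \<subseteq> {..<n}"
  proof
    fix l assume "l \<in> F"
    then have "adj T r l" unfolding F_def leafn_def by simp
    then show "l \<in> {..<n}" using proper_adj[OF p] by auto
  qed
  have uF: "u \<in> F" using u F_def by simp
  have un: "u < n" using uF Fn by auto
  have Fnb: "nbrs T l = {r}" if "l \<in> F" for l using that leaf_nbrs unfolding F_def by blast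
  have au: "a u \<noteq> 0"
  proof -
    have "{r, u} \<in> T" using Fnb[OF uF] unfolding nbrs_def by (auto simp: insert_commute)
    then show ?thesis using wz unfolding a_def by blast
  qed
  have S0: "S > 0"
  proof -
    have "(a u)\<^sup>2 \<le> S" unfolding S_def using fF uF by (intro member_le_sum) auto
    moreover have "(a u)\<^sup>2 > 0" using au by simp
    ultimately show ?thesis by linarith
  qed
  have Aj: "wadj T w i j = (if i = r then a j else 0)" if "j \<in> F" for i j
  proof -
    have "{i, j} \<in> T \<longleftrightarrow> i = r" using Fnb[OF that] unfolding nbrs_def by (auto simp: insert_commute)
    then show ?thesis unfolding wadj_def a_def by auto
  qed
  define pv where "pv j = (if j = u then 1 else 0) - q j" for j
  have pv0: "pv j = 0" if "j \<notin> F" for j using that uF unfolding pv_def q_def by auto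
  have ker: "Aop n (wadj T w) pv = (\<lambda>i. 0)"
  proof
    fix i
    have "Aop n (wadj T w) pv i = (\<Sum>j\<in>F. wadj T w i j * pv j)"
      unfolding Aop_def using Fn pv0 by (intro sum.mono_neutral_right) auto
    also have "\<dots> = (\<Sum>j\<in>F. (if i = r then a j else 0) * pv j)" using Aj by (intro sum.cong) auto
    also have "\<dots> = 0"
    proof (cases "i = r")
      case True
      have e1: "a j * pv j = (if j = u then a j else 0) - (a u / S) * (a j)\<^sup>2" if "j \<in> F" for j
        using that unfolding pv_def q_def by (auto simp: power2_eq_square algebra_simps)
      have "(\<Sum>j\<in>F. a j * pv j) = (\<Sum>j\<in>F. (if j = u then a j else 0) - (a u / S) * (a j)\<^sup>2)"
        using e1 by (rule sum.cong[OF refl])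
      also have "\<dots> = (\<Sum>j\<in>F. (if j = u then a j else 0)) - (a u / S) * (\<Sum>j\<in>F. (a j)\<^sup>2)"
        by (simp only: sum_subtractf sum_distrib_left)
      also have "\<dots> = a u - a u" using uF fF S0 unfolding S_def by (simp add: sum.delta)
      finally show ?thesis using True by simp
    qed simp
    finally show "Aop n (wadj T w) pv i = 0" .
  qed
  have ipq: "ip n q q = (a u)\<^sup>2 / S"
  proof -
    have "ip n q q = (\<Sum>j\<in>F. q j * q j)"
      unfolding ip_def using Fn by (intro sum.mono_neutral_right) (auto simp: q_def)
    also have "\<dots> = (\<Sum>j\<in>F. (a u / S)\<^sup>2 * (a j)\<^sup>2)" unfolding q_def by (intro sum.cong) (auto simp: power2_eq_square)
    also have "\<dots> = (a u / S)\<^sup>2 * S" unfolding S_def by (simp add: sum_distrib_left)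
    also have "\<dots> = (a u)\<^sup>2 / S" using S0 by (simp add: power2_eq_square)
    finally show ?thesis .
  qed
  have "2 * ip n q q < 1"
  proof -
    have "2 * (a u)\<^sup>2 < S" using lt unfolding a_def S_def F_def .
    then have "(2 * (a u)\<^sup>2) / S < 1" using S0 by (simp add: divide_less_eq_1_pos)
    then show ?thesis using ipq by (simp add: times_divide_eq_right)
  qed
  moreover have "Aop n (wadj T w) (\<lambda>j. (if j = u then 1 else 0) - q j) = (\<lambda>i. 0)"
    using ker unfolding pv_def .
  ultimately show ?thesis using sed_crit[where A="wadj T w" and u=u and n=n and q=q] wadj_sym un by blast
qed

lemma good_weighted:
  assumes p: "proper n T" and wz: "\<forall>e\<in>T. w e \<noteq> 0" and r: "r < n" and c: "3 \<le> card (leafn T r)"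
  shows "\<exists>u<n. \<exists>v<n. u \<noteq> v \<and> sedentary n (wadj T w) u \<and> sedentary n (wadj T w) v"
proof -
  define F where "F = leafn T r"
  define a where "a l = w {r, l}" for l
  define S where "S = (\<Sum>l\<in>F. (a l)\<^sup>2)"
  have fF: "finite F" unfolding F_def using leafn_finite[OF p] .
  have Fn: "l < n" if "l \<in> F" for l
  proof -
    have "adj T r l" using that unfolding F_def leafn_def by simp
    then show ?thesis using proper_adj[OF p] by auto
  qed
  have an: "a l \<noteq> 0" if "l \<in> F" for l
  proof -
    have "adj T r l" using that unfolding F_def leafn_def by simp
    then have "{r, l} \<in> T" unfolding adj_def .
    then show ?thesis using wz unfolding a_def by blast
  qed
  have good: "sedentary n (wadj T w) l" if "l \<in> F" "2 * (a l)\<^sup>2 < S" for l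
    using leaf_sed[OF p wz r] that unfolding F_def a_def S_def by blast
  have one: "l1 = l2" if l: "l1 \<in> F" "l2 \<in> F" "\<not> 2 * (a l1)\<^sup>2 < S" "\<not> 2 * (a l2)\<^sup>2 < S" for l1 l2
  proof (rule ccontr)
    assume ne: "l1 \<noteq> l2"
    have "card {l1, l2} = 2" using ne by simp
    then have "{l1, l2} \<noteq> F" using c F_def by auto
    then obtain l3 where l3: "l3 \<in> F" "l3 \<noteq> l1" "l3 \<noteq> l2" using l by blast
    have "(\<Sum>l\<in>{l1, l2, l3}. (a l)\<^sup>2) \<le> S" unfolding S_def using l l3 fF by (intro sum_mono2) auto
    moreover have "(\<Sum>l\<in>{l1, l2, l3}. (a l)\<^sup>2) = (a l1)\<^sup>2 + (a l2)\<^sup>2 + (a l3)\<^sup>2" using ne l3 by simp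
    moreover have "(a l3)\<^sup>2 > 0" using an[OF l3(1)] by simp
    ultimately show False using l(3,4) by linarith
  qed
  obtain x y z where xyz: "x \<in> F" "y \<in> F" "z \<in> F" "x \<noteq> y" "x \<noteq> z" "y \<noteq> z"
  proof -
    have "3 \<le> card F" using c F_def by simp
    then obtain F3 where F3: "F3 \<subseteq> F" "card F3 = 3" by (meson obtain_subset_with_card_n)
    then obtain x y z where "F3 = {x, y, z}" "x \<noteq> y" "y \<noteq> z" "x \<noteq> z" unfolding card_3_iff by blast
    then show ?thesis using that F3(1) by blast
  qed
  have "\<exists>u v. u \<in> F \<and> v \<in> F \<and> u \<noteq> v \<and> 2 * (a u)\<^sup>2 < S \<and> 2 * (a v)\<^sup>2 < S"
  proof (cases "2 * (a x)\<^sup>2 < S")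
    case True
    show ?thesis
    proof (cases "2 * (a y)\<^sup>2 < S")
      case True
      then show ?thesis using \<open>2 * (a x)\<^sup>2 < S\<close> xyz by blast
    next
      case False
      then have "2 * (a z)\<^sup>2 < S" using one[of y z] xyz(2,3,6) by auto
      then show ?thesis using \<open>2 * (a x)\<^sup>2 < S\<close> xyz by blast
    qed
  next
    case False
    then have "2 * (a y)\<^sup>2 < S" "2 * (a z)\<^sup>2 < S" using one[of x y] one[of x z] xyz(1,2,3,4,5) by auto
    then show ?thesis using xyz by blast
  qed
  then obtain u v where "u \<in> F" "v \<in> F" "u \<noteq> v" "2 * (a u)\<^sup>2 < S" "2 * (a v)\<^sup>2 < S" by blast
  then show ?thesis using good Fn by blast
qed

lemma good_unweighted:
  assumes p: "proper n T" and r: "r < n" and c: "k \<le> card (leafn T r)" and k: "k \<ge> 3"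
  shows "k \<le> card {u. u < n \<and> sedentary n (wadj T (\<lambda>_. 1)) u}"
proof -
  define F where "F = leafn T r"
  have fF: "finite F" unfolding F_def using leafn_finite[OF p] .
  have "F \<subseteq> {u. u < n \<and> sedentary n (wadj T (\<lambda>_. 1)) u}"
  proof
    fix l assume l: "l \<in> F"
    have "adj T r l" using l unfolding F_def leafn_def by simp
    then have ln: "l < n" using proper_adj[OF p] by auto
    have "(\<Sum>l\<in>leafn T r. ((\<lambda>_. 1::real) {r, l})\<^sup>2) = real (card F)" unfolding F_def by simp
    moreover have "real (card F) \<ge> 3" using c k F_def by simp
    ultimately have "2 * ((\<lambda>_. 1::real) {r, l})\<^sup>2 < (\<Sum>l\<in>leafn T r. ((\<lambda>_. 1::real) {r, l})\<^sup>2)" by simp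
    then have "sedentary n (wadj T (\<lambda>_. 1)) l" using leaf_sed[OF p _ r] l unfolding F_def by simp
    then show "l \<in> {u. u < n \<and> sedentary n (wadj T (\<lambda>_. 1)) u}" using ln by simp
  qed
  then have "card F \<le> card {u. u < n \<and> sedentary n (wadj T (\<lambda>_. 1)) u}" by (intro card_mono) auto
  then show ?thesis using c F_def by simp
qed

lemma not_bad: "\<not> badm m n T \<Longrightarrow> \<exists>r<n. m \<le> card (leafn T r)"
  unfolding badm_def by (auto simp: not_less)

theorem corollary25:
  shows "almost_all_trees (\<lambda>n T. \<forall>w :: nat set \<Rightarrow> real. (\<forall>e\<in>T. w e \<noteq> 0) \<longrightarrow>
            (\<exists>u<n. \<exists>v<n. u \<noteq> v \<and> sedentary n (wadj T w) u \<and> sedentary n (wadj T w) v))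
     \<and> (\<forall>k::nat. k \<ge> 3 \<longrightarrow>
           almost_all_trees (\<lambda>n T. card {u. u < n \<and> sedentary n (wadj T (\<lambda>_. 1)) u} \<ge> k))"
proof
  show "almost_all_trees (\<lambda>n T. \<forall>w :: nat set \<Rightarrow> real. (\<forall>e\<in>T. w e \<noteq> 0) \<longrightarrow>
            (\<exists>u<n. \<exists>v<n. u \<noteq> v \<and> sedentary n (wadj T w) u \<and> sedentary n (wadj T w) v))"
  proof (rule almost_all_good[where m = 3])
    fix n T assume t: "is_tree n T" and nb: "\<not> badm 3 n T"
    obtain r where r: "r < n" "3 \<le> card (leafn T r)" using not_bad[OF nb] by blast
    show "\<forall>w :: nat set \<Rightarrow> real. (\<forall>e\<in>T. w e \<noteq> 0) \<longrightarrow>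
            (\<exists>u<n. \<exists>v<n. u \<noteq> v \<and> sedentary n (wadj T w) u \<and> sedentary n (wadj T w) v)"
      using good_weighted[OF tree_proper[OF t] _ r] by blast
  qed
  show "\<forall>k::nat. k \<ge> 3 \<longrightarrow>
           almost_all_trees (\<lambda>n T. card {u. u < n \<and> sedentary n (wadj T (\<lambda>_. 1)) u} \<ge> k)"
  proof (intro allI impI)
    fix k :: nat assume k: "k \<ge> 3"
    show "almost_all_trees (\<lambda>n T. card {u. u < n \<and> sedentary n (wadj T (\<lambda>_. 1)) u} \<ge> k)"
    proof (rule almost_all_good[where m = k])
      fix n T assume t: "is_tree n T" and nb: "\<not> badm k n T"
      obtain r where r: "r < n" "k \<le> card (leafn T r)" using not_bad[OF nb] by blast
      show "card {u. u < n \<and> sedentary n (wadj T (\<lambda>_. 1)) u} \<ge> k"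
        using good_unweighted[OF tree_proper[OF t] r k] .
    qed
  qed
qed

end
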